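(* Let $a\geq3$ be an odd integer and let $\alpha\in A_a\cup B_a$. (1) If $\alpha\in A_{a-2}$, then the sequence of compatible orbits $\{\mathscr{O}_n((0,0),\alpha)\}_{n=0}^\infty$, where $\mathscr{O}_n((0,0),\alpha)$ is the orbit of the prefractal billiard table $\Omega(S_{a,n})$ with initial condition $((0,0),\alpha)$, is a sequence of compatible periodic orbits. (2) If $\alpha\in B_a$, $n_0\in\mathbb{N}$ and $r<2a^{n_0}$ is an odd positive integer, then the sequence of compatible orbits $\{\mathscr{O}_n((\tfrac{r}{2a^{n_0}},0),\alpha)\}_{n=0}^\infty$ of the tables $\Omega(S_{a,n})$ with initial condition $((\tfrac{r}{2a^{n_0}},0),\alpha)$ is a sequence of compatible periodic orbits. Furthermore, in each case the sequence of compatible periodic orbits is eventually constant, and its trivial limit (the common path of the orbits from some index on) constitutes a periodic orbit of the self-similar Sierpinski carpet billiard table $\Omega(S_a)$.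
   Context: Let $Q=[0,1]^2$. For odd $a\geq3$: $S_{a,0}=Q$, and $S_{a,n}$ is obtained from $S_{a,n-1}$ (a union of closed squares of side $a^{-(n-1)}$) by dividing each such square into $a^2$ subsquares of side $a^{-n}$ and removing the open middle one; $S_a=\bigcap_n S_{a,n}$. A peripheral square is the boundary of a removed open square. $A_b=\{\tfrac pq: p+q\leq b,\ 0\leq p<q\leq b-1,\ p,q\in\mathbb{N}\cup\{0\},\ p+q \text{ odd}\}$ and $B_b=\{\tfrac pq: p+q\leq b-1,\ 0\leq p\leq q\leq b-2,\ p,q\in\mathbb{N},\ p,q\text{ odd}\}$ for odd $b\ge3$, with $A_1=\{0\}$. The prefractal billiard table $\Omega(S_{a,n})$ is the region $S_{a,n}$ with boundary $\partial S_{a,n}$ (the boundary of $Q$ together with the peripheral squares of side $\geq a^{-n}$); a billiard ball moves in straight lines and reflects off the boundary with angle of reflection equal to angle of incidence. At a corner of $Q$ reflection is well defined (the ball exits reflected through the angle bisector); if the ball hits a corner of a peripheral square, the trajectory terminates there (the orbit is singular). An initial condition $(x^0,\alpha)$ consists of a boundary point $x^0$ and an inward direction of slope $\alpha$ (i.e. $\alpha=\tan\theta^0$); its orbit is the sequence of successive collision points with their outgoing directions. An orbit is closed if it has finitely many elements, and periodic if it is nonsingular and there is a least $m\geq1$ with the $m$-th iterate of the billiard map equal to the initial condition. Initial conditions $(x_n^0,\alpha)$ for $\Omega(S_{a,n})$ and $(x_m^0,\alpha)$ for $\Omega(S_{a,m})$, $n>m$, with the same slope are compatible if $x_n^0,x_m^0$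 lie on a segment of direction $\alpha$ meeting $\partial S_{a,n}$ only at $x_n^0$; a sequence of orbits $\{\mathscr{O}_n\}_{n\geq N}$ of $\Omega(S_{a,n})$ with pairwise compatible initial conditions is a sequence of compatible orbits, and it is a sequence of compatible periodic orbits if every $\mathscr{O}_n$ is periodic. It is constant if the path traversed by $\mathscr{O}_{n+1}$ equals that traversed by $\mathscr{O}_n$ for all $n\geq N$, and eventually constant if this holds from some index on. A periodic orbit of $\Omega(S_a)$ is understood, in this paper, as the trivial limit (common path) of an eventually constant sequence of compatible periodic orbits. *)

theory Defs
  imports Complex_Main
begin

type_synonym pt = "real \<times> real"
type_synonym state = "pt \<times> pt"  (* collision point, outgoing direction vector *)

definition mid :: "nat \<Rightarrow> nat" where
  "mid a = (a - 1) div 2"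

text \<open>cells a k: index pairs (i,j) such that the closed square
  [i/a^k,(i+1)/a^k] x [j/a^k,(j+1)/a^k] is one of the squares making up S_{a,k}.\<close>
fun cells :: "nat \<Rightarrow> nat \<Rightarrow> (nat \<times> nat) set" where
  "cells a 0 = {(0,0)}"
| "cells a (Suc k) = {(a*i+u, a*j+w) | i j u w. (i,j) \<in> cells a k \<and> u < a \<and> w < a
                         \<and> \<not> (u = mid a \<and> w = mid a)}"

definition csq :: "pt \<Rightarrow> real \<Rightarrow> pt set" where
  "csq c s = {(x,y). fst c \<le> x \<and> x \<le> fst c + s \<and> snd c \<le> y \<and> y \<le> snd c + s}"

definition Sn :: "nat \<Rightarrow> nat \<Rightarrow> pt set" where
  "Sn a n = (\<Union>(i,j)\<in>cells a n. csq (real i / real a ^ n, real j / real a ^ n) (1 / real a ^ n))"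

text \<open>Peripheral squares of the table Omega(S_{a,n}): pairs (lower-left corner, side) of the
  open middle squares removed at the levels k = 1..n (side a^-k >= a^-n).\<close>
definition psq :: "nat \<Rightarrow> nat \<Rightarrow> (pt \<times> real) set" where
  "psq a n = {((real (a*i + mid a) / real a ^ k, real (a*j + mid a) / real a ^ k), 1 / real a ^ k)
               | k i j. 1 \<le> k \<and> k \<le> n \<and> (i,j) \<in> cells a (k - 1)}"

definition hedges :: "pt \<Rightarrow> real \<Rightarrow> pt set" where
  "hedges c s = {(x,y). fst c \<le> x \<and> x \<le> fst c + s \<and> (y = snd c \<or> y = snd c + s)}"
definition vedges :: "pt \<Rightarrow> real \<Rightarrow> pt set" where
  "vedges c s = {(x,y). snd c \<le> y \<and> y \<le> snd c + s \<and> (x = fst c \<or> x = fst c + s)}"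
definition sqcorners :: "pt \<Rightarrow> real \<Rightarrow> pt set" where
  "sqcorners c s = {(fst c, snd c), (fst c + s, snd c), (fst c, snd c + s), (fst c + s, snd c + s)}"

text \<open>The boundary \<partial>S_{a,n} = \<partial>Q together with the peripheral squares of level <= n,
  split into horizontal and vertical parts; corners of Q and of peripheral squares.\<close>
definition hbd :: "nat \<Rightarrow> nat \<Rightarrow> pt set" where
  "hbd a n = hedges (0,0) 1 \<union> (\<Union>(c,s)\<in>psq a n. hedges c s)"
definition vbd :: "nat \<Rightarrow> nat \<Rightarrow> pt set" where
  "vbd a n = vedges (0,0) 1 \<union> (\<Union>(c,s)\<in>psq a n. vedges c s)"
definition Qcorners :: "pt set" where
  "Qcorners = sqcorners (0,0) 1"
definition pcorners :: "nat \<Rightarrow> nat \<Rightarrow> pt set" where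
  "pcorners a n = (\<Union>(c,s)\<in>psq a n. sqcorners c s)"
definition bdry :: "nat \<Rightarrow> nat \<Rightarrow> pt set" where
  "bdry a n = hbd a n \<union> vbd a n"

definition ray :: "pt \<Rightarrow> pt \<Rightarrow> real \<Rightarrow> pt" where
  "ray x v t = (fst x + t * fst v, snd x + t * snd v)"

text \<open>t > 0 is a collision time: the ball reaches a corner, or crosses a horizontal edge
  with nonzero vertical velocity, or a vertical edge with nonzero horizontal velocity
  (gliding along an edge of the unit square is not a collision).\<close>
definition hit :: "nat \<Rightarrow> nat \<Rightarrow> pt \<Rightarrow> pt \<Rightarrow> real \<Rightarrow> bool" where
  "hit a n x v t \<longleftrightarrow> t > 0 \<and>
     (ray x v t \<in> Qcorners \<union> pcorners a n
      \<or> (ray x v t \<in> hbd a n \<and> snd v \<noteq> 0)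
      \<or> (ray x v t \<in> vbd a n \<and> fst v \<noteq> 0))"

text \<open>One step of the billiard map; None = the orbit terminates (singular: it hits a corner of a
  peripheral square).  At a corner of Q the ball is reflected back along the angle bisector.\<close>
definition bstep :: "nat \<Rightarrow> nat \<Rightarrow> state \<Rightarrow> state option" where
  "bstep a n s = (let x = fst s; v = snd s in
     if \<exists>t. hit a n x v t then
       (let p = ray x v (LEAST t. hit a n x v t) in
        if p \<in> pcorners a n then None
        else if p \<in> Qcorners then Some (p, (- fst v, - snd v))
        else if p \<in> hbd a n then Some (p, (fst v, - snd v))
        else Some (p, (- fst v, snd v)))
     else None)"

fun orbit :: "nat \<Rightarrow> nat \<Rightarrow> state \<Rightarrow> nat \<Rightarrow> state option" where
  "orbit a n s 0 = Some s"
| "orbit a n s (Suc k) = Option.bind (orbit a n s k) (bstep a n)"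

definition singular :: "nat \<Rightarrow> nat \<Rightarrow> state \<Rightarrow> bool" where
  "singular a n s \<longleftrightarrow> (\<exists>k. orbit a n s k = None)"

definition periodic :: "nat \<Rightarrow> nat \<Rightarrow> state \<Rightarrow> bool" where
  "periodic a n s \<longleftrightarrow> \<not> singular a n s \<and> (\<exists>m \<ge> 1. orbit a n s m = Some s)"

definition seg :: "pt \<Rightarrow> pt \<Rightarrow> pt set" where
  "seg p q = {(fst p + t * (fst q - fst p), snd p + t * (snd q - snd p)) | t. 0 \<le> t \<and> t \<le> 1}"

definition orbit_path :: "nat \<Rightarrow> nat \<Rightarrow> state \<Rightarrow> pt set" where
  "orbit_path a n s = (\<Union>k. case (orbit a n s k, orbit a n s (Suc k)) of
       (Some s1, Some s2) \<Rightarrow> seg (fst s1) (fst s2) | _ \<Rightarrow> {})"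

text \<open>Compatibility of initial conditions (x_n, v) on Omega(S_{a,n}) and (x_m, v) on Omega(S_{a,m}),
  n > m, with the same direction v: x_n, x_m lie on a segment of direction v meeting
  \<partial>S_{a,n} only at x_n.\<close>
definition compatible :: "nat \<Rightarrow> nat \<Rightarrow> state \<Rightarrow> state \<Rightarrow> bool" where
  "compatible a n sn sm \<longleftrightarrow> snd sn = snd sm \<and>
     (\<exists>t. fst sm = ray (fst sn) (snd sn) t \<and> seg (fst sn) (fst sm) \<inter> bdry a n \<subseteq> {fst sn})"

text \<open>A periodic orbit of Omega(S_a) (paper's definition): the common path of an eventually
  constant sequence of compatible periodic orbits {O_n}_{n>=N}.\<close>
definition periodic_orbit_Sa :: "nat \<Rightarrow> pt set \<Rightarrow> bool" where
  "periodic_orbit_Sa a P \<longleftrightarrow> (\<exists>N s. (\<forall>n\<ge>N. periodic a n (s n))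
      \<and> (\<forall>m n. N \<le> m \<and> m < n \<longrightarrow> compatible a n (s n) (s m))
      \<and> (\<exists>M\<ge>N. (\<forall>n\<ge>M. orbit_path a (Suc n) (s (Suc n)) = orbit_path a n (s n))
                 \<and> P = orbit_path a M (s M)))"

definition A_set :: "nat \<Rightarrow> real set" where
  "A_set b = (if b = 1 then {0} else
     {real p / real q | p q. p + q \<le> b \<and> p < q \<and> q \<le> b - 1 \<and> odd (p + q)})"

definition B_set :: "nat \<Rightarrow> real set" where
  "B_set b = {real p / real q | p q. p + q \<le> b - 1 \<and> 1 \<le> p \<and> p \<le> q \<and> q \<le> b - 2
               \<and> odd p \<and> odd q}"

end

theory Submission
  imports Defs
begin


lemma mid_props: "odd a \<Longrightarrow> a \<ge> 3 \<Longrightarrow> 2 * mid a + 1 = a \<and> 1 \<le> mid a \<and> mid a + 1 < a"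
  unfolding mid_def by presburger

lemma cells_bound: "a \<ge> 1 \<Longrightarrow> (i,j) \<in> cells a k \<Longrightarrow> i < a ^ k \<and> j < a ^ k"
proof (induction k arbitrary: i j)
  case 0 then show ?case by simp
next
  case (Suc k)
  then obtain i0 j0 u w where e: "i = a*i0+u" "j = a*j0+w" "(i0,j0) \<in> cells a k" "u < a" "w < a" by auto
  with Suc.IH[OF Suc.prems(1) e(3)] have "i0 + 1 \<le> a^k" "j0 + 1 \<le> a^k" by auto
  hence "a*(i0+1) \<le> a*a^k" "a*(j0+1) \<le> a*a^k" using mult_le_mono2 by blast+
  moreover have "i < a*(i0+1)" "j < a*(j0+1)" using e by auto
  ultimately show ?case by auto
qed

lemma cells_finite: "finite (cells a k)"
proof (induction k)
  case 0 then show ?case by simp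
next
  case (Suc k)
  have "cells a (Suc k) \<subseteq> (\<lambda>((i,j),(u,w)). (a*i+u, a*j+w)) ` (cells a k \<times> ({..<a} \<times> {..<a}))"
  proof
    fix x assume "x \<in> cells a (Suc k)"
    then obtain i j u w where "x = (a*i+u, a*j+w)" "(i,j) \<in> cells a k" "u < a" "w < a" by auto
    then show "x \<in> (\<lambda>((i,j),(u,w)). (a*i+u, a*j+w)) ` (cells a k \<times> ({..<a} \<times> {..<a}))"
      by (intro image_eqI[where x="((i,j),(u,w))"]) auto
  qed
  then show ?case using Suc by (meson finite_SigmaI finite_imageI finite_lessThan finite_subset)
qed

definition sq :: "nat \<Rightarrow> nat \<Rightarrow> nat \<Rightarrow> nat \<Rightarrow> pt \<times> real" where
  "sq a k i j = ((real (a*i + mid a) / real a ^ k, real (a*j + mid a) / real a ^ k), 1 / real a ^ k)"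

lemma psq_iff: "x \<in> psq a n \<longleftrightarrow> (\<exists>k i j. 1 \<le> k \<and> k \<le> n \<and> (i,j) \<in> cells a (k - 1) \<and> x = sq a k i j)"
  unfolding psq_def sq_def by blast

lemma psq_finite: assumes "a \<ge> 1" shows "finite (psq a n)"
proof -
  have "psq a n \<subseteq> (\<lambda>(k,i,j). sq a k i j) ` ({..n} \<times> {..<a^n} \<times> {..<a^n})"
  proof
    fix x assume "x \<in> psq a n"
    then obtain k i j where kij: "1 \<le> k" "k \<le> n" "(i,j) \<in> cells a (k - 1)" "x = sq a k i j"
      unfolding psq_iff by blast
    from cells_bound[OF assms kij(3)] have "i < a^(k-1)" "j < a^(k-1)" by auto
    moreover have "a^(k-1) \<le> a^n" using assms kij(2) by (simp add: power_increasing)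
    ultimately have "i < a^n" "j < a^n" by auto
    then show "x \<in> (\<lambda>(k,i,j). sq a k i j) ` ({..n} \<times> {..<a^n} \<times> {..<a^n})"
      using kij by (intro image_eqI[where x="(k,i,j)"]) auto
  qed
  then show ?thesis by (rule finite_subset) auto
qed

lemma sq_interior:
  assumes "odd a" "a \<ge> 3" "x \<in> psq a n"
  shows "0 < fst (fst x) \<and> fst (fst x) + snd x < 1 \<and> 0 < snd (fst x) \<and> snd (fst x) + snd x < 1"
proof -
  obtain k i j where kij: "1 \<le> k" "k \<le> n" "(i,j) \<in> cells a (k - 1)" "x = sq a k i j"
    using assms(3) unfolding psq_iff by blast
  have m: "2 * mid a + 1 = a" "1 \<le> mid a" "mid a + 1 < a" using mid_props[OF assms(1,2)] by auto
  from cells_bound[of a i j "k-1"] kij(3) assms(2) have b: "i + 1 \<le> a^(k-1)" "j + 1 \<le> a^(k-1)" by auto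
  have ak: "a^k = a * a^(k-1)" using kij(1) by (metis Suc_diff_le diff_Suc_1 power_Suc)
  have "a*(i+1) \<le> a * a^(k-1)" "a*(j+1) \<le> a*a^(k-1)" using b mult_le_mono2 by blast+
  hence i1: "a*i + mid a + 1 < a^k" "a*j + mid a + 1 < a^k" using m ak by (auto simp: algebra_simps)
  have pos: "real a ^ k > 0" using assms(2) by simp
  have "real (a*i + mid a) / real a ^ k > 0" "real (a*j + mid a) / real a ^ k > 0" using m pos by (auto intro!: divide_pos_pos add_nonneg_pos)
  moreover have "real (a*i + mid a) / real a ^ k + 1 / real a ^ k = real (a*i + mid a + 1) / real a ^ k"
     "real (a*j + mid a) / real a ^ k + 1 / real a ^ k = real (a*j + mid a + 1) / real a ^ k"
    by (simp_all add: add_divide_distrib)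
  moreover have "real (a*i + mid a + 1) < real a ^ k" "real (a*j + mid a + 1) < real a ^ k"
    using i1 by (metis of_nat_less_iff of_nat_power)+
  ultimately show ?thesis using kij(4) pos unfolding sq_def by auto
qed

lemma psq_mono: assumes "m \<le> n" shows "psq a m \<subseteq> psq a n"
proof
  fix x assume "x \<in> psq a m"
  then obtain k i j where "1 \<le> k" "k \<le> m" "(i,j) \<in> cells a (k - 1)" "x = sq a k i j" unfolding psq_iff by blast
  then show "x \<in> psq a n" using assms unfolding psq_iff by (intro exI[of _ k] exI[of _ i] exI[of _ j]) auto
qed

lemma psq_split: "x \<in> psq a n \<Longrightarrow> x \<in> psq a m \<or> (\<exists>k i j. m < k \<and> k \<le> n \<and> (i,j) \<in> cells a (k - 1) \<and> x = sq a k i j)"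
proof -
  assume "x \<in> psq a n"
  then obtain k i j where "1 \<le> k" "k \<le> n" "(i,j) \<in> cells a (k - 1)" "x = sq a k i j" unfolding psq_iff by blast
  then show ?thesis unfolding psq_iff
    by (cases "k \<le> m") (blast, metis not_le)
qed

definition Zn :: "nat \<Rightarrow> nat \<Rightarrow> real set" where
  "Zn a n = {x. \<exists>k::int. x = of_int k / real a ^ n}"

lemma Zn_nat: assumes "a > 0" "k \<le> n" shows "real N / real a ^ k \<in> Zn a n"
proof -
  have e: "real a ^ n = real a ^ k * real a ^ (n - k)" using assms(2) by (metis le_add_diff_inverse power_add)
  have "real N / real a ^ k = of_int (int (N * a^(n-k))) / real a ^ n"
    using assms(1) by (simp add: e)
  then show ?thesis unfolding Zn_def by blast
qed

lemma sq_Zn: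
  assumes "a > 0" "x \<in> psq a n"
  shows "fst (fst x) \<in> Zn a n" "snd (fst x) \<in> Zn a n" "fst (fst x) + snd x \<in> Zn a n" "snd (fst x) + snd x \<in> Zn a n"
proof -
  obtain k i j where kij: "1 \<le> k" "k \<le> n" "(i,j) \<in> cells a (k - 1)" "x = sq a k i j"
    using assms(2) unfolding psq_iff by blast
  have e1: "real (a*i + mid a) / real a ^ k + 1 / real a ^ k = real (a*i + mid a + 1) / real a ^ k"
     and e2: "real (a*j + mid a) / real a ^ k + 1 / real a ^ k = real (a*j + mid a + 1) / real a ^ k"
    by (simp_all add: add_divide_distrib)
  show "fst (fst x) \<in> Zn a n" "snd (fst x) \<in> Zn a n" "fst (fst x) + snd x \<in> Zn a n" "snd (fst x) + snd x \<in> Zn a n"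
    using Zn_nat[OF assms(1) kij(2), of "a*i + mid a"] Zn_nat[OF assms(1) kij(2), of "a*j + mid a"]
      Zn_nat[OF assms(1) kij(2), of "a*i + mid a + 1"] Zn_nat[OF assms(1) kij(2), of "a*j + mid a + 1"]
    by (simp_all only: kij(4) sq_def fst_conv snd_conv e1 e2)
qed

definition Hy :: "nat \<Rightarrow> nat \<Rightarrow> real set" where
  "Hy a n = {0,1} \<union> (\<lambda>x. snd (fst x)) ` psq a n \<union> (\<lambda>x. snd (fst x) + snd x) ` psq a n"
definition Vx :: "nat \<Rightarrow> nat \<Rightarrow> real set" where
  "Vx a n = {0,1} \<union> (\<lambda>x. fst (fst x)) ` psq a n \<union> (\<lambda>x. fst (fst x) + snd x) ` psq a n"

lemma Hy_finite: "a \<ge> 1 \<Longrightarrow> finite (Hy a n)" unfolding Hy_def using psq_finite by auto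
lemma Vx_finite: "a \<ge> 1 \<Longrightarrow> finite (Vx a n)" unfolding Vx_def using psq_finite by auto

lemma Zn_01: "a > 0 \<Longrightarrow> (0::real) \<in> Zn a n \<and> 1 \<in> Zn a n"
  using Zn_nat[of a n n 0] Zn_nat[of a 0 n 1] by auto

lemma Hy_Zn: "a > 0 \<Longrightarrow> Hy a n \<subseteq> Zn a n" unfolding Hy_def using sq_Zn Zn_01 by (auto simp del: of_nat_power)
lemma Vx_Zn: "a > 0 \<Longrightarrow> Vx a n \<subseteq> Zn a n" unfolding Vx_def using sq_Zn Zn_01 by (auto simp del: of_nat_power)

lemma hbd_iff: "z \<in> hbd a n \<longleftrightarrow> z \<in> hedges (0,0) 1 \<or> (\<exists>x\<in>psq a n. z \<in> hedges (fst x) (snd x))"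
  unfolding hbd_def case_prod_unfold by blast
lemma vbd_iff: "z \<in> vbd a n \<longleftrightarrow> z \<in> vedges (0,0) 1 \<or> (\<exists>x\<in>psq a n. z \<in> vedges (fst x) (snd x))"
  unfolding vbd_def case_prod_unfold by blast
lemma pcorners_iff: "z \<in> pcorners a n \<longleftrightarrow> (\<exists>x\<in>psq a n. z \<in> sqcorners (fst x) (snd x))"
  unfolding pcorners_def case_prod_unfold by blast

lemma hbd_Hy: assumes "z \<in> hbd a n" shows "snd z \<in> Hy a n"
proof -
  consider "z \<in> hedges (0,0) 1" | x where "x \<in> psq a n" "z \<in> hedges (fst x) (snd x)"
    using assms unfolding hbd_iff by blast
  then show ?thesis
  proof cases
    case 1 then show ?thesis unfolding Hy_def hedges_def by auto
  next
    case 2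
    then have "snd z = snd (fst x) \<or> snd z = snd (fst x) + snd x" unfolding hedges_def by auto
    then show ?thesis unfolding Hy_def using 2(1) by blast
  qed
qed
lemma vbd_Vx: assumes "z \<in> vbd a n" shows "fst z \<in> Vx a n"
proof -
  consider "z \<in> vedges (0,0) 1" | x where "x \<in> psq a n" "z \<in> vedges (fst x) (snd x)"
    using assms unfolding vbd_iff by blast
  then show ?thesis
  proof cases
    case 1 then show ?thesis unfolding Vx_def vedges_def by auto
  next
    case 2
    then have "fst z = fst (fst x) \<or> fst z = fst (fst x) + snd x" unfolding vedges_def by auto
    then show ?thesis unfolding Vx_def using 2(1) by blast
  qed
qed

lemma sqcorners_sub: "s \<ge> 0 \<Longrightarrow> sqcorners c s \<subseteq> hedges c s \<inter> vedges c s"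
  unfolding sqcorners_def hedges_def vedges_def by auto
lemma edges_csq: "hedges c s \<subseteq> csq c s" "vedges c s \<subseteq> csq c s" "s \<ge> 0 \<Longrightarrow> sqcorners c s \<subseteq> csq c s"
  unfolding sqcorners_def hedges_def vedges_def csq_def by auto

lemma psq_side_pos: "x \<in> psq a n \<Longrightarrow> snd x \<ge> 0"
  unfolding psq_iff sq_def by auto

lemma corners_hv: "z \<in> Qcorners \<union> pcorners a n \<Longrightarrow> z \<in> hbd a n \<and> z \<in> vbd a n"
proof -
  assume "z \<in> Qcorners \<union> pcorners a n"
  then consider "z \<in> sqcorners (0,0) 1" | x where "x \<in> psq a n" "z \<in> sqcorners (fst x) (snd x)"
    by (auto simp: Qcorners_def pcorners_iff)
  then show ?thesis
  proof cases
    case 1 then show ?thesis using sqcorners_sub[of 1 "(0,0)"] unfolding hbd_iff vbd_iff by auto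
  next
    case 2 then show ?thesis using sqcorners_sub[OF psq_side_pos[OF 2(1)]] unfolding hbd_iff vbd_iff by blast
  qed
qed

lemma psq_pts_interior:
  assumes "odd a" "a \<ge> 3" "x \<in> psq a n" "z \<in> csq (fst x) (snd x)"
  shows "0 < fst z \<and> fst z < 1 \<and> 0 < snd z \<and> snd z < 1"
  using sq_interior[OF assms(1-3)] assms(4) unfolding csq_def by auto

lemma pcorners_interior:
  assumes "odd a" "a \<ge> 3" "z \<in> pcorners a n"
  shows "0 < fst z \<and> fst z < 1 \<and> 0 < snd z \<and> snd z < 1"
proof -
  obtain x where "x \<in> psq a n" "z \<in> sqcorners (fst x) (snd x)" using assms(3) unfolding pcorners_iff by blast
  then show ?thesis using psq_pts_interior[OF assms(1,2)] edges_csq(3)[OF psq_side_pos] by blast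
qed

lemma hbd_boundary:
  assumes "odd a" "a \<ge> 3" "z \<in> hbd a n" "fst z = 0 \<or> fst z = 1"
  shows "z \<in> Qcorners"
proof -
  have "\<not> (\<exists>x\<in>psq a n. z \<in> hedges (fst x) (snd x))"
  proof
    assume "\<exists>x\<in>psq a n. z \<in> hedges (fst x) (snd x)"
    then obtain x where x: "x \<in> psq a n" "z \<in> csq (fst x) (snd x)" using edges_csq(1) by blast
    show False using psq_pts_interior[OF assms(1,2) x] assms(4) by linarith
  qed
  then have "z \<in> hedges (0,0) 1" using assms(3) unfolding hbd_iff by blast
  then show ?thesis using assms(4) unfolding hedges_def Qcorners_def sqcorners_def
    by (cases z) auto
qed

lemma vbd_boundary:
  assumes "odd a" "a \<ge> 3" "z \<in> vbd a n" "snd z = 0 \<or> snd z = 1"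
  shows "z \<in> Qcorners"
proof -
  have "\<not> (\<exists>x\<in>psq a n. z \<in> vedges (fst x) (snd x))"
  proof
    assume "\<exists>x\<in>psq a n. z \<in> vedges (fst x) (snd x)"
    then obtain x where x: "x \<in> psq a n" "z \<in> csq (fst x) (snd x)" using edges_csq(2) by blast
    show False using psq_pts_interior[OF assms(1,2) x] assms(4) by linarith
  qed
  then have "z \<in> vedges (0,0) 1" using assms(3) unfolding vbd_iff by blast
  then show ?thesis using assms(4) unfolding vedges_def Qcorners_def sqcorners_def
    by (cases z) auto
qed



lemma ray_fst[simp]: "fst (ray x v t) = fst x + t * fst v" and ray_snd[simp]: "snd (ray x v t) = snd x + t * snd v"
  unfolding ray_def by auto

lemma hit_sub:
  assumes "hit a n x v t" "v \<noteq> (0,0)"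
  shows "(snd v \<noteq> 0 \<and> snd (ray x v t) \<in> Hy a n) \<or> (fst v \<noteq> 0 \<and> fst (ray x v t) \<in> Vx a n)"
proof -
  have "ray x v t \<in> Qcorners \<union> pcorners a n \<or> (ray x v t \<in> hbd a n \<and> snd v \<noteq> 0) \<or> (ray x v t \<in> vbd a n \<and> fst v \<noteq> 0)"
    using assms(1) unfolding hit_def by auto
  then show ?thesis
  proof (elim disjE)
    assume "ray x v t \<in> Qcorners \<union> pcorners a n"
    then have "snd (ray x v t) \<in> Hy a n" "fst (ray x v t) \<in> Vx a n" using corners_hv hbd_Hy vbd_Vx by blast+
    then show ?thesis using assms(2) by (cases v) auto
  qed (use hbd_Hy vbd_Vx in blast)+
qed

lemma hit_finite:
  assumes "v \<noteq> (0,0)" "a \<ge> 1"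
  shows "finite {t. hit a n x v t}"
proof -
  have "{t. hit a n x v t} \<subseteq> (\<lambda>h. (h - snd x) / snd v) ` Hy a n \<union> (\<lambda>h. (h - fst x) / fst v) ` Vx a n"
  proof
    fix t assume "t \<in> {t. hit a n x v t}"
    then have "(snd v \<noteq> 0 \<and> snd x + t * snd v \<in> Hy a n) \<or> (fst v \<noteq> 0 \<and> fst x + t * fst v \<in> Vx a n)"
      using hit_sub[OF _ assms(1)] by fastforce
    then show "t \<in> (\<lambda>h. (h - snd x) / snd v) ` Hy a n \<union> (\<lambda>h. (h - fst x) / fst v) ` Vx a n"
    proof (elim disjE conjE)
      assume "snd v \<noteq> 0" "snd x + t * snd v \<in> Hy a n"
      then show ?thesis by (intro UnI1 image_eqI[where x="snd x + t * snd v"]) auto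
    next
      assume "fst v \<noteq> 0" "fst x + t * fst v \<in> Vx a n"
      then show ?thesis by (intro UnI2 image_eqI[where x="fst x + t * fst v"]) auto
    qed
  qed
  then show ?thesis using Hy_finite[OF assms(2)] Vx_finite[OF assms(2)] by (meson finite_UnI finite_imageI finite_subset)
qed

lemma least_hit:
  assumes "v \<noteq> (0,0)" "a \<ge> 1" "hit a n x v t0"
  shows "hit a n x v (LEAST t. hit a n x v t) \<and> (\<forall>t. hit a n x v t \<longrightarrow> (LEAST t. hit a n x v t) \<le> t)"
proof -
  let ?S = "{t. hit a n x v t}"
  have f: "finite ?S" and ne: "?S \<noteq> {}" using hit_finite[OF assms(1,2)] assms(3) by auto
  have "(LEAST t. hit a n x v t) = Min ?S"
    by (rule Least_equality) (use Min_in[OF f ne] Min_le[OF f] in auto)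
  then show ?thesis using Min_in[OF f ne] Min_le[OF f] by auto
qed

definition bref :: "nat \<Rightarrow> nat \<Rightarrow> pt \<Rightarrow> pt \<Rightarrow> pt" where
  "bref a n p v = (if p \<in> Qcorners then (- fst v, - snd v) else if p \<in> hbd a n then (fst v, - snd v) else (- fst v, snd v))"

lemma bstep_hitT:
  assumes "hit a n x v T" "\<forall>t. hit a n x v t \<longrightarrow> T \<le> t"
  shows "bstep a n (x,v) = (if ray x v T \<in> pcorners a n then None else Some (ray x v T, bref a n (ray x v T) v))"
proof -
  have L: "(LEAST t. hit a n x v t) = T" by (rule Least_equality) (use assms in auto)
  show ?thesis unfolding bstep_def Let_def bref_def using assms(1) L by auto
qed

definition Gc :: "nat \<Rightarrow> nat \<Rightarrow> state \<Rightarrow> bool" where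
  "Gc a n s \<longleftrightarrow> fst s \<notin> pcorners a n \<and> (fst s \<in> Qcorners \<or> (fst s \<in> hbd a n \<and> snd (snd s) \<noteq> 0)
     \<or> (fst s \<in> vbd a n \<and> fst (snd s) \<noteq> 0))"

lemma bstep_some_hit: "bstep a n (x,v) = Some s' \<Longrightarrow> \<exists>t. hit a n x v t"
  unfolding bstep_def Let_def by (auto split: if_splits)

lemma bstep_rev:
  assumes "a \<ge> 1" "v \<noteq> (0,0)" "Gc a n (x,v)" "bstep a n (x,v) = Some (p', w)"
  shows "w = bref a n p' v \<and> bstep a n (p', (- fst v, - snd v)) = Some (x, bref a n x (- fst v, - snd v))"
proof -
  obtain t0 where "hit a n x v t0" using bstep_some_hit[OF assms(4)] by blast
  define T where "T = (LEAST t. hit a n x v t)"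
  have hT: "hit a n x v T" and mT: "\<forall>t. hit a n x v t \<longrightarrow> T \<le> t"
    using least_hit[OF assms(2,1) \<open>hit a n x v t0\<close>] unfolding T_def by auto
  have pc: "ray x v T \<notin> pcorners a n" and pw: "p' = ray x v T" "w = bref a n (ray x v T) v"
    using assms(4) unfolding bstep_hitT[OF hT mT] by (auto split: if_splits)
  have Tpos: "T > 0" using hT unfolding hit_def by auto
  let ?u = "(- fst v, - snd v)"
  have rr: "ray p' ?u t = ray x v (T - t)" for t
    unfolding pw ray_def by (auto simp: algebra_simps)
  have r0: "ray p' ?u T = x" using rr[of T] by (simp add: ray_def)
  have h2: "hit a n p' ?u T"
    using assms(3) Tpos unfolding hit_def Gc_def r0 by auto
  have m2: "\<forall>t. hit a n p' ?u t \<longrightarrow> T \<le> t"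
  proof (intro allI impI)
    fix t assume ht: "hit a n p' ?u t"
    show "T \<le> t"
    proof (rule ccontr)
      assume "\<not> T \<le> t"
      then have "hit a n x v (T - t)" using ht rr[of t] unfolding hit_def by auto
      then have "T \<le> T - t" using mT by blast
      then show False using ht unfolding hit_def by auto
    qed
  qed
  have "x \<notin> pcorners a n" using assms(3) unfolding Gc_def by auto
  then have "bstep a n (p', ?u) = Some (x, bref a n x ?u)"
    unfolding bstep_hitT[OF h2 m2] r0 by simp
  then show ?thesis using pw by simp
qed

lemma bref_inj: "bref a n p v = bref a n p w \<Longrightarrow> v = w"
  unfolding bref_def by (cases v; cases w) (auto split: if_splits)

lemma bstep_inj:
  assumes "a \<ge> 1" "snd s1 \<noteq> (0,0)" "snd s2 \<noteq> (0,0)" "Gc a n s1" "Gc a n s2"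
    "bstep a n s1 = Some s'" "bstep a n s2 = Some s'"
  shows "s1 = s2"
proof -
  obtain x1 v1 x2 v2 p' w where e: "s1 = (x1,v1)" "s2 = (x2,v2)" "s' = (p',w)" by (metis prod.exhaust)
  note r1 = bstep_rev[OF assms(1), of v1 n x1 p' w] and r2 = bstep_rev[OF assms(1), of v2 n x2 p' w]
  have "w = bref a n p' v1" "w = bref a n p' v2" using r1 r2 assms e by auto
  then have "v1 = v2" using bref_inj by metis
  then show ?thesis using r1 r2 assms e by auto
qed

lemma periodic_gen:
  assumes a1: "a \<ge> 1" and fin: "finite {s. P s}" and P0: "P s0"
    and stp: "\<And>s. P s \<Longrightarrow> \<exists>s'. bstep a n s = Some s' \<and> P s'"
    and G: "\<And>s. P s \<Longrightarrow> Gc a n s \<and> snd s \<noteq> (0,0)"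
  shows "periodic a n s0"
proof -
  define g where "g s = the (bstep a n s)" for s
  have gP: "bstep a n s = Some (g s) \<and> P (g s)" if Ps: "P s" for s
  proof -
    obtain s' where "bstep a n s = Some s'" "P s'" using stp[OF Ps] by blast
    then show ?thesis unfolding g_def by simp
  qed
  have orb: "orbit a n s0 k = Some ((g^^k) s0) \<and> P ((g^^k) s0)" for k
  proof (induction k)
    case 0 then show ?case using P0 by simp
  next
    case (Suc k)
    then have "bstep a n ((g^^k) s0) = Some (g ((g^^k) s0))" "P (g ((g^^k) s0))" using gP by blast+
    then show ?case using Suc by simp
  qed
  have ns: "\<not> singular a n s0" unfolding singular_def using orb by (auto)
  have ginj: "s1 = s2" if "P s1" "P s2" "g s1 = g s2" for s1 s2
  proof -
    have "bstep a n s1 = Some (g s1)" "bstep a n s2 = Some (g s1)" using gP[OF that(1)] gP[OF that(2)] that(3) by (auto)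
    then show ?thesis using bstep_inj[OF a1, of s1 s2 n "g s1"] G[OF that(1)] G[OF that(2)] by (blast)
  qed
  have cancel: "(g^^(i+d)) s0 = (g^^i) s0 \<Longrightarrow> (g^^d) s0 = s0" for i d
  proof (induction i)
    case 0 then show ?case by simp
  next
    case (Suc i)
    have "g ((g^^(i+d)) s0) = g ((g^^i) s0)" using Suc.prems by simp
    then have "(g^^(i+d)) s0 = (g^^i) s0" using ginj[OF conjunct2[OF orb[of "i+d"]] conjunct2[OF orb[of i]]] by (blast)
    then show ?case using Suc.IH by (blast)
  qed
  let ?X = "{s. P s}"
  have "\<not> inj_on (\<lambda>k. (g^^k) s0) {0..card ?X}"
  proof
    assume "inj_on (\<lambda>k. (g^^k) s0) {0..card ?X}"
    moreover have "(\<lambda>k. (g^^k) s0) ` {0..card ?X} \<subseteq> ?X" using orb by (auto)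
    ultimately have "card {0..card ?X} \<le> card ?X" using card_inj_on_le fin by (blast)
    then show False by simp
  qed
  then obtain i j where ij: "i \<in> {0..card ?X}" "j \<in> {0..card ?X}" "i \<noteq> j" "(g^^i) s0 = (g^^j) s0"
    unfolding inj_on_def by (blast)
  have "\<exists>i' d. d \<ge> 1 \<and> (g^^(i'+d)) s0 = (g^^i') s0"
  proof (cases "i < j")
    case True then show ?thesis using ij by (intro exI[of _ i] exI[of _ "j - i"]) auto
  next
    case False then show ?thesis using ij by (intro exI[of _ j] exI[of _ "i - j"]) auto
  qed
  then obtain i' d where d1: "d \<ge> 1" and dd: "(g^^(i'+d)) s0 = (g^^i') s0" by blast
  have "(g^^d) s0 = s0" using cancel[OF dd] .
  then have "orbit a n s0 d = Some s0" using orb[of d] by simp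
  then show ?thesis unfolding periodic_def using ns d1 by blast
qed



definition Bst :: "real \<Rightarrow> state \<Rightarrow> bool" where
  "Bst \<alpha> s \<longleftrightarrow> (\<exists>e1 e2. (e1 = 1 \<or> e1 = -1) \<and> (e2 = 1 \<or> e2 = -1) \<and> snd s = (e1, e2*\<alpha>))
     \<and> 0 \<le> fst (fst s) \<and> fst (fst s) \<le> 1 \<and> 0 \<le> snd (fst s) \<and> snd (fst s) \<le> 1
     \<and> (fst (fst s) = 0 \<longrightarrow> fst (snd s) > 0) \<and> (fst (fst s) = 1 \<longrightarrow> fst (snd s) < 0)
     \<and> (snd (fst s) = 0 \<longrightarrow> snd (snd s) \<ge> 0) \<and> (snd (fst s) = 1 \<longrightarrow> snd (snd s) \<le> 0)"

lemma hedgesQ: "0 \<le> x \<Longrightarrow> x \<le> 1 \<Longrightarrow> (y = 0 \<or> y = 1) \<Longrightarrow> (x,y) \<in> hbd a n"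
  unfolding hbd_iff hedges_def by auto
lemma vedgesQ: "0 \<le> y \<Longrightarrow> y \<le> 1 \<Longrightarrow> (x = 0 \<or> x = 1) \<Longrightarrow> (x,y) \<in> vbd a n"
  unfolding vbd_iff vedges_def by auto

lemma B_exit:
  assumes "Bst \<alpha> ((x,y),v)" "\<alpha> \<ge> 0"
  shows "\<exists>T0. hit a n (x,y) v T0 \<and> (\<forall>t. 0 \<le> t \<and> t \<le> T0 \<longrightarrow> 0 \<le> x + t * fst v \<and> x + t * fst v \<le> 1 \<and> 0 \<le> y + t * snd v \<and> y + t * snd v \<le> 1)"
proof -
  have ex: "\<exists>e1 e2. (e1 = 1 \<or> e1 = -1) \<and> (e2 = 1 \<or> e2 = -1) \<and> v = (e1, e2*\<alpha>)"
    and q: "0 \<le> x" "x \<le> 1" "0 \<le> y" "y \<le> 1"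
    and inw0: "x = 0 \<longrightarrow> fst v > 0" "x = 1 \<longrightarrow> fst v < 0" "y = 0 \<longrightarrow> snd v \<ge> 0" "y = 1 \<longrightarrow> snd v \<le> 0"
    using assms(1) unfolding Bst_def by simp_all
  obtain e1 e2 where e: "e1 = 1 \<or> e1 = -1" "e2 = 1 \<or> e2 = -1" "v = (e1, e2*\<alpha>)" using ex by blast
  have inw: "x = 0 \<longrightarrow> e1 > 0" "x = 1 \<longrightarrow> e1 < 0" "y = 0 \<longrightarrow> e2*\<alpha> \<ge> 0" "y = 1 \<longrightarrow> e2*\<alpha> \<le> 0"
    using inw0 e(3) by auto
  define tx where "tx = (if e1 = 1 then 1 - x else x)"
  define dy where "dy = (if e2 = 1 then 1 - y else y)"
  have tx: "tx > 0" using e(1) inw q unfolding tx_def by auto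
  have dy: "dy \<ge> 0" using q unfolding dy_def by auto
  have xin: "0 \<le> x + t * e1 \<and> x + t * e1 \<le> 1" if "0 \<le> t" "t \<le> tx" for t
    using e(1) that q unfolding tx_def by (auto split: if_splits)
  have yin: "0 \<le> y + t * (e2*\<alpha>) \<and> y + t * (e2*\<alpha>) \<le> 1" if "0 \<le> t" "t * \<alpha> \<le> dy" for t
  proof -
    have "0 \<le> t * \<alpha>" using that(1) assms(2) by simp
    then show ?thesis using e(2) that q unfolding dy_def by (auto split: if_splits simp: algebra_simps)
  qed
  show ?thesis
  proof (cases "tx * \<alpha> \<le> dy")
    case True
    have "x + tx * e1 = 0 \<or> x + tx * e1 = 1" using e(1) unfolding tx_def by auto
    moreover have "0 \<le> y + tx * (e2*\<alpha>) \<and> y + tx * (e2*\<alpha>) \<le> 1" using yin[of tx] tx True by auto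
    ultimately have "hit a n (x,y) v tx" using tx e unfolding hit_def ray_def by (auto intro!: vedgesQ)
    moreover have "\<forall>t. 0 \<le> t \<and> t \<le> tx \<longrightarrow> 0 \<le> x + t * fst v \<and> x + t * fst v \<le> 1 \<and> 0 \<le> y + t * snd v \<and> y + t * snd v \<le> 1"
    proof (intro allI impI)
      fix t assume t: "0 \<le> t \<and> t \<le> tx"
      have "t * \<alpha> \<le> tx * \<alpha>" using t assms(2) by (simp add: mult_right_mono)
      then show "0 \<le> x + t * fst v \<and> x + t * fst v \<le> 1 \<and> 0 \<le> y + t * snd v \<and> y + t * snd v \<le> 1"
        using xin[of t] yin[of t] t True e(3) by auto
    qed
    ultimately show ?thesis by blast
  next
    case False
    then have ap: "\<alpha> > 0" using tx dy assms(2) by (metis mult_eq_0_iff mult_le_0_iff not_less order_antisym_conv)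
    define ty where "ty = dy / \<alpha>"
    have tya: "ty * \<alpha> = dy" unfolding ty_def using ap by simp
    have tytx: "ty < tx" using False tya ap by (metis mult_right_mono not_le order.strict_iff_not)
    have dyp: "dy > 0"
    proof -
      have "y = 1 \<longrightarrow> e2 = -1" "y = 0 \<longrightarrow> e2 = 1" using inw(3,4) e(2) ap by (auto simp: mult_le_0_iff zero_le_mult_iff)
      then show ?thesis using q e(2) unfolding dy_def by auto
    qed
    have tyP: "ty > 0" unfolding ty_def using dyp ap by simp
    have "y + ty * (e2*\<alpha>) = 0 \<or> y + ty * (e2*\<alpha>) = 1"
      using e(2) tya unfolding dy_def by (auto simp: algebra_simps split: if_splits)
    moreover have "0 \<le> x + ty * e1 \<and> x + ty * e1 \<le> 1" using xin[of ty] tyP tytx by auto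
    moreover have "e2 * \<alpha> \<noteq> 0" using ap e(2) by auto
    ultimately have "hit a n (x,y) v ty" using tyP e unfolding hit_def ray_def by (auto intro!: hedgesQ)
    moreover have "\<forall>t. 0 \<le> t \<and> t \<le> ty \<longrightarrow> 0 \<le> x + t * fst v \<and> x + t * fst v \<le> 1 \<and> 0 \<le> y + t * snd v \<and> y + t * snd v \<le> 1"
    proof (intro allI impI)
      fix t assume t: "0 \<le> t \<and> t \<le> ty"
      have "t * \<alpha> \<le> ty * \<alpha>" using t ap by (simp add: mult_right_mono)
      then show "0 \<le> x + t * fst v \<and> x + t * fst v \<le> 1 \<and> 0 \<le> y + t * snd v \<and> y + t * snd v \<le> 1"
        using xin[of t] yin[of t] t tya tytx e(3) by auto
    qed
    ultimately show ?thesis by blast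
  qed
qed

lemma bref_cases: "bref a n p v = (- fst v, - snd v) \<or> bref a n p v = (fst v, - snd v) \<or> bref a n p v = (- fst v, snd v)"
  unfolding bref_def by auto

lemma bref_fst_bd: "odd a \<Longrightarrow> a \<ge> 3 \<Longrightarrow> fst p = 0 \<or> fst p = 1 \<Longrightarrow> fst (bref a n p v) = - fst v"
  unfolding bref_def using hbd_boundary by auto

lemma bref_snd_bd: "snd p = 0 \<or> snd p = 1 \<Longrightarrow> 0 \<le> fst p \<Longrightarrow> fst p \<le> 1 \<Longrightarrow> snd (bref a n p v) = - snd v"
  unfolding bref_def using hedgesQ[of "fst p" "snd p" a n] by (cases p) auto

lemma B_step:
  assumes "odd a" "a \<ge> 3" "\<alpha> \<ge> 0" "Bst \<alpha> ((x,y),v)" "hit a n (x,y) v T" "\<forall>t. hit a n (x,y) v t \<longrightarrow> T \<le> t"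
  shows "Bst \<alpha> (ray (x,y) v T, bref a n (ray (x,y) v T) v)"
proof -
  have ex: "\<exists>e1 e2. (e1 = 1 \<or> e1 = -1) \<and> (e2 = 1 \<or> e2 = -1) \<and> v = (e1, e2*\<alpha>)"
    and q: "0 \<le> x" "x \<le> 1" "0 \<le> y" "y \<le> 1"
    using assms(4) unfolding Bst_def by simp_all
  obtain e1 e2 where e: "e1 = 1 \<or> e1 = -1" "e2 = 1 \<or> e2 = -1" "v = (e1, e2*\<alpha>)" using ex by blast
  obtain T0 where T0: "hit a n (x,y) v T0" "\<forall>t. 0 \<le> t \<and> t \<le> T0 \<longrightarrow> 0 \<le> x + t * fst v \<and> x + t * fst v \<le> 1 \<and> 0 \<le> y + t * snd v \<and> y + t * snd v \<le> 1"
    using B_exit[OF assms(4,3)] by blast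
  have Tp: "T > 0" using assms(5) unfolding hit_def by auto
  have TT0: "T \<le> T0" using assms(6) T0(1) by blast
  define x' where "x' = x + T * e1"
  define y' where "y' = y + T * (e2*\<alpha>)"
  have p': "ray (x,y) v T = (x', y')" unfolding x'_def y'_def ray_def e(3) by simp
  have qn: "0 \<le> x'" "x' \<le> 1" "0 \<le> y'" "y' \<le> 1" using T0(2)[rule_format, of T] Tp TT0 e(3) unfolding x'_def y'_def by auto
  define v' where "v' = bref a n (x',y') v"
  have v'c: "v' = (- fst v, - snd v) \<or> v' = (fst v, - snd v) \<or> v' = (- fst v, snd v)" unfolding v'_def by (rule bref_cases)
  have ex': "\<exists>e1 e2. (e1 = 1 \<or> e1 = -1) \<and> (e2 = 1 \<or> e2 = -1) \<and> v' = (e1, e2*\<alpha>)"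
  proof -
    have m1: "-e1 = 1 \<or> -e1 = -1" "-e2 = 1 \<or> -e2 = -1" using e(1,2) by auto
    from v'c show ?thesis
    proof (elim disjE)
      assume "v' = (- fst v, - snd v)" then have "v' = (-e1, (-e2)*\<alpha>)" using e(3) by simp
      then show ?thesis using m1 by blast
    next
      assume "v' = (fst v, - snd v)" then have "v' = (e1, (-e2)*\<alpha>)" using e(3) by simp
      then show ?thesis using m1 e(1) by blast
    next
      assume "v' = (- fst v, snd v)" then have "v' = (-e1, e2*\<alpha>)" using e(3) by simp
      then show ?thesis using m1 e(2) by blast
    qed
  qed
  have i1: "x' = 0 \<longrightarrow> fst v' > 0"
  proof
    assume x0: "x' = 0"
    then have "e1 = -1" using e(1) Tp q unfolding x'_def by auto
    moreover have "fst v' = - fst v" unfolding v'_def using bref_fst_bd[OF assms(1,2)] x0 by auto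
    ultimately show "fst v' > 0" using e(3) by simp
  qed
  have i2: "x' = 1 \<longrightarrow> fst v' < 0"
  proof
    assume x0: "x' = 1"
    then have "e1 = 1" using e(1) Tp q unfolding x'_def by auto
    moreover have "fst v' = - fst v" unfolding v'_def using bref_fst_bd[OF assms(1,2)] x0 by auto
    ultimately show "fst v' < 0" using e(3) by simp
  qed
  have sv: "snd v' = - snd v" if "y' = 0 \<or> y' = 1"
    unfolding v'_def using bref_snd_bd[of "(x',y')"] that qn by simp
  have i3: "y' = 0 \<longrightarrow> snd v' \<ge> 0"
  proof
    assume y0: "y' = 0"
    show "snd v' \<ge> 0"
    proof (cases "\<alpha> = 0")
      case True then show ?thesis using v'c e(3) by auto
    next
      case False
      then have "\<alpha> > 0" using assms(3) by simp
      then have "T * \<alpha> > 0" using Tp by simp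
      then have "e2 = -1" using e(2) q y0 unfolding y'_def by auto
      then show ?thesis using sv y0 e(3) assms(3) by simp
    qed
  qed
  have i4: "y' = 1 \<longrightarrow> snd v' \<le> 0"
  proof
    assume y0: "y' = 1"
    show "snd v' \<le> 0"
    proof (cases "\<alpha> = 0")
      case True then show ?thesis using v'c e(3) by auto
    next
      case False
      then have ap: "\<alpha> > 0" using assms(3) by simp
      have "e2 = 1"
      proof (rule ccontr)
        assume "e2 \<noteq> 1" then have "e2 = -1" using e(2) by simp
        moreover have "T * \<alpha> > 0" using Tp ap by simp
        ultimately have "y' < 1" using q unfolding y'_def by (simp add: algebra_simps)
        then show False using y0 by simp
      qed
      then show ?thesis using sv y0 e(3) assms(3) by simp
    qed
  qed
  show ?thesis unfolding p' Bst_def fst_conv snd_conv v'_def[symmetric]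
    using ex' qn i1 i2 i3 i4 by blast
qed

definition Kf :: "real \<Rightarrow> state \<Rightarrow> real" where
  "Kf q s = q * (fst (snd s) * snd (fst s) - snd (snd s) * fst (fst s))"

lemma K_ray: "Kf q (ray x v t, v) = Kf q (x, v)"
  unfolding Kf_def ray_def by (simp add: algebra_simps)

lemma K_bref:
  "(p \<in> Qcorners \<and> Kf q (p, bref a n p v) = - Kf q (p,v))
   \<or> (p \<notin> Qcorners \<and> p \<in> hbd a n \<and> Kf q (p, bref a n p v) = - Kf q (p,v) + 2 * q * fst v * snd p)
   \<or> (p \<notin> Qcorners \<and> p \<notin> hbd a n \<and> Kf q (p, bref a n p v) = - Kf q (p,v) - 2 * q * snd v * fst p)"
  unfolding Kf_def bref_def by (auto simp: algebra_simps)

lemma bref_nz: "fst (bref a n p v) \<noteq> 0 \<longleftrightarrow> fst v \<noteq> 0" "snd (bref a n p v) \<noteq> 0 \<longleftrightarrow> snd v \<noteq> 0"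
  using bref_cases[of a n p v] by auto

lemma Bst_v: "Bst \<alpha> s \<Longrightarrow> fst (snd s) = 1 \<or> fst (snd s) = -1"
  unfolding Bst_def by auto

lemma step_gen:
  assumes "odd a" "a \<ge> 3" "\<alpha> \<ge> 0" "Bst \<alpha> ((x,y),v)"
    and H: "\<And>T. hit a n (x,y) v T \<Longrightarrow> (\<forall>t. hit a n (x,y) v t \<longrightarrow> T \<le> t) \<Longrightarrow>
              ray (x,y) v T \<notin> pcorners a n \<and> Lt (Kf q (ray (x,y) v T, bref a n (ray (x,y) v T) v))"
  shows "\<exists>s'. bstep a n ((x,y),v) = Some s' \<and> Bst \<alpha> s' \<and> Lt (Kf q s') \<and> Gc a n s'"
proof -
  obtain T0 where "hit a n (x,y) v T0" using B_exit[OF assms(4,3)] by blast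
  moreover have vnz: "v \<noteq> (0,0)" using Bst_v[OF assms(4)] by auto
  ultimately obtain T where hT: "hit a n (x,y) v T" and mT: "\<forall>t. hit a n (x,y) v t \<longrightarrow> T \<le> t"
    using least_hit[OF _ _, of v a n "(x,y)" T0] assms(2) by auto
  have HH: "ray (x,y) v T \<notin> pcorners a n" "Lt (Kf q (ray (x,y) v T, bref a n (ray (x,y) v T) v))" using H[OF hT mT] by auto
  have bs: "bstep a n ((x,y),v) = Some (ray (x,y) v T, bref a n (ray (x,y) v T) v)"
    using bstep_hitT[OF hT mT] HH(1) by simp
  have "Bst \<alpha> (ray (x,y) v T, bref a n (ray (x,y) v T) v)" using B_step[OF assms(1-4) hT mT] .
  moreover have "Gc a n (ray (x,y) v T, bref a n (ray (x,y) v T) v)"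
    using hT HH(1) bref_nz[of a n "ray (x,y) v T" v] unfolding Gc_def hit_def by auto
  ultimately show ?thesis using bs HH(2) by blast
qed

lemma fin_gen:
  fixes p q :: real
  assumes "a \<ge> 1" "q > 0" "p \<ge> 0" "\<alpha> = p / q" "finite {z. Lt z \<and> \<bar>z\<bar> \<le> p + q}"
  shows "finite {s. Bst \<alpha> s \<and> Lt (Kf q s) \<and> Gc a n s}"
proof -
  define E where "E = {1, -1::real}"
  define W where "W = {\<alpha>, -\<alpha>}"
  define LB where "LB = {z. Lt z \<and> \<bar>z\<bar> \<le> p + q}"
  define F1 where "F1 = (\<lambda>(x,K,e1,w). (x, e1*(K/q + w*x))) ` (Vx a n \<times> LB \<times> E \<times> W)"
  define F2 where "F2 = (\<lambda>(y,K,e1,w). ((e1*y - K/q)/w, y)) ` (Hy a n \<times> LB \<times> E \<times> W)"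
  define V where "V = (\<lambda>(e1,w). (e1,w)) ` (E \<times> W)"
  have finE: "finite E" "finite W" unfolding E_def W_def by auto
  have fin: "finite ((Qcorners \<union> F1 \<union> F2) \<times> V)"
    unfolding F1_def F2_def V_def Qcorners_def sqcorners_def
    using finE Vx_finite[OF assms(1)] Hy_finite[OF assms(1)] assms(5) unfolding LB_def[symmetric]
    by (intro finite_SigmaI finite_UnI finite_imageI) auto
  have "{s. Bst \<alpha> s \<and> Lt (Kf q s) \<and> Gc a n s} \<subseteq> (Qcorners \<union> F1 \<union> F2) \<times> V"
  proof
    fix s assume "s \<in> {s. Bst \<alpha> s \<and> Lt (Kf q s) \<and> Gc a n s}"
    then have B: "Bst \<alpha> s" and L: "Lt (Kf q s)" and G: "Gc a n s" by auto
    obtain x y v1 v2 where s: "s = ((x,y),(v1,v2))" by (metis prod.exhaust)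
    have ex: "\<exists>e1 e2. (e1 = 1 \<or> e1 = -1) \<and> (e2 = 1 \<or> e2 = -1) \<and> (v1,v2) = (e1, e2*\<alpha>)"
      and q: "0 \<le> x" "x \<le> 1" "0 \<le> y" "y \<le> 1"
      using B unfolding Bst_def s by simp_all
    obtain e1 e2 where e: "e1 = 1 \<or> e1 = -1" "e2 = 1 \<or> e2 = -1" "v1 = e1" "v2 = e2*\<alpha>" using ex by blast
    have v1E: "v1 \<in> E" and v2W: "v2 \<in> W" using e unfolding E_def W_def by auto
    have V: "(v1,v2) \<in> V" unfolding V_def using v1E v2W by auto
    define K where "K = Kf q s"
    have K: "K = q * (v1 * y - v2 * x)" unfolding K_def Kf_def s by simp
    have av: "\<bar>v2\<bar> * q = p" using e assms(2,3,4) by auto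
    have "\<bar>K\<bar> \<le> q * (\<bar>v1\<bar> * y + \<bar>v2\<bar> * x)"
    proof -
      have "\<bar>v1 * y - v2 * x\<bar> \<le> \<bar>v1\<bar> * y + \<bar>v2\<bar> * x" using q by (simp add: abs_mult abs_triangle_ineq4[THEN order_trans])
      then show ?thesis unfolding K using assms(2) by (simp add: abs_mult mult_left_mono)
    qed
    also have "\<dots> \<le> q * (1 + \<bar>v2\<bar>)"
    proof -
      have "\<bar>v2\<bar> * x \<le> \<bar>v2\<bar>" using q by (simp add: mult_left_le)
      moreover have "\<bar>v1\<bar> * y \<le> 1" using q e(1,3) by auto
      ultimately show ?thesis using assms(2) by (intro mult_left_mono) auto
    qed
    also have "\<dots> = q + p" using av by (simp add: algebra_simps)
    finally have KLB: "K \<in> LB" using L unfolding LB_def K_def by auto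
    have qK: "K / q = v1 * y - v2 * x" unfolding K using assms(2) by simp
    consider "(x,y) \<in> Qcorners" | "(x,y) \<in> hbd a n" "v2 \<noteq> 0" | "(x,y) \<in> vbd a n" "v1 \<noteq> 0"
      using G unfolding Gc_def s by auto
    then have "(x,y) \<in> Qcorners \<union> F1 \<union> F2"
    proof cases
      case 1 then show ?thesis by blast
    next
      case 2
      have yH: "y \<in> Hy a n" using hbd_Hy[OF 2(1)] by simp
      have "x = (v1*y - K/q)/v2" using qK 2(2) by (simp add: field_simps)
      then have "(x,y) \<in> F2" unfolding F2_def using yH KLB v1E v2W
        by (intro image_eqI[where x="(y,K,v1,v2)"]) auto
      then show ?thesis by blast
    next
      case 3
      have xV: "x \<in> Vx a n" using vbd_Vx[OF 3(1)] by simp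
      have "y = v1*(K/q + v2*x)" using qK e(1,3) by auto
      then have "(x,y) \<in> F1" unfolding F1_def using xV KLB v1E v2W
        by (intro image_eqI[where x="(x,K,v1,v2)"]) auto
      then show ?thesis by blast
    qed
    then show "s \<in> (Qcorners \<union> F1 \<union> F2) \<times> V" using V s by auto
  qed
  then show ?thesis using fin finite_subset by blast
qed



lemma avoid_core:
  fixes a i j p q :: nat and G s1 s2 :: int and X Y :: real
  assumes "odd a" "a \<ge> 3" "p + q < a" "s1 = 1 \<or> s1 = -1" "s2 = 1 \<or> s2 = -1"
    "real (a*i + mid a) \<le> X" "X \<le> real (a*i + mid a) + 1"
    "real (a*j + mid a) \<le> Y" "Y \<le> real (a*j + mid a) + 1"
    "2*(of_int s1 * real q * Y - of_int s2 * real p * X) = real a * of_int G" "odd (G + int p + int q)"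
  shows False
proof -
  have m: "2 * mid a + 1 = a" using mid_props[OF assms(1,2)] by auto
  then have mr: "2 * real (mid a) + 1 = real a" by (metis of_nat_1 of_nat_add of_nat_mult of_nat_numeral)
  define Xc where "Xc = 2*X - real a * (2*i+1)"
  define Yc where "Yc = 2*Y - real a * (2*j+1)"
  have Xc: "-1 \<le> Xc" "Xc \<le> 1" using assms(6,7) mr unfolding Xc_def by (auto simp: algebra_simps)
  have Yc: "-1 \<le> Yc" "Yc \<le> 1" using assms(8,9) mr unfolding Yc_def by (auto simp: algebra_simps)
  define H where "H = s1 * int q * (2*j+1) - s2 * int p * (2*i+1)"
  have Heven: "even (H + int p + int q)"
  proof -
    have "H + int p + int q = (s1 * (2*j+1) + 1) * int q - (s2 * (2*i+1) - 1) * int p" unfolding H_def by (simp add: algebra_simps)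
    moreover have "even (s1 * (2*j+1) + 1)" "even (s2 * (2*i+1) - 1)" using assms(4,5) by auto
    ultimately show ?thesis by simp
  qed
  have Dodd: "odd (G - H)"
  proof
    assume "even (G - H)"
    then have "even ((G + int p + int q) - (H + int p + int q))" by simp
    then show False using Heven assms(11) by (metis even_add even_diff)
  qed
  then have Dnz: "G - H \<noteq> 0" by auto
  then have D1: "\<bar>real_of_int (G - H)\<bar> \<ge> 1" by linarith
  define R where "R = of_int s1 * real q * Yc - of_int s2 * real p * Xc"
  have "2*(of_int s1 * real q * Y - of_int s2 * real p * X) = real a * of_int H + R"
    unfolding R_def H_def Xc_def Yc_def by (simp add: algebra_simps)
  then have aD: "real a * of_int (G - H) = R" using assms(10) by (simp add: algebra_simps)
  have s1a: "\<bar>real_of_int s1\<bar> = 1" "\<bar>real_of_int s2\<bar> = 1" using assms(4,5) by auto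
  have "\<bar>R\<bar> \<le> \<bar>of_int s1 * real q * Yc\<bar> + \<bar>of_int s2 * real p * Xc\<bar>" unfolding R_def by (rule abs_triangle_ineq4)
  also have "\<dots> = real q * \<bar>Yc\<bar> + real p * \<bar>Xc\<bar>" using s1a by (simp add: abs_mult)
  also have "\<dots> \<le> real q + real p" using Xc Yc by (intro add_mono) (auto intro!: mult_left_le)
  finally have "\<bar>R\<bar> < real a" using assms(3) by linarith
  moreover have "\<bar>real a * of_int (G - H)\<bar> \<ge> real a"
  proof -
    have "real a * 1 \<le> real a * \<bar>real_of_int (G - H)\<bar>" using D1 by (intro mult_left_mono) auto
    then show ?thesis by (simp add: abs_mult)
  qed
  ultimately show False using aD by simp
qed

lemma avoid_sq:
  fixes a i j p q k :: nat and G s1 s2 :: int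
  assumes "odd a" "a \<ge> 3" "p + q < a" "s1 = 1 \<or> s1 = -1" "s2 = 1 \<or> s2 = -1" "q > 0"
    "z \<in> csq (fst (sq a k i j)) (snd (sq a k i j))"
    "2 * real a ^ k * Kf (real q) (z, (of_int s1, of_int s2 * (real p / real q))) = real a * of_int G"
    "odd (G + int p + int q)"
  shows False
proof -
  obtain zx zy where z: "z = (zx, zy)" by (cases z)
  have ak: "real a ^ k > 0" using assms(2) by simp
  define X where "X = real a ^ k * zx"
  define Y where "Y = real a ^ k * zy"
  have cx: "real (a*i + mid a) / real a ^ k \<le> zx" "zx \<le> real (a*i + mid a) / real a ^ k + 1 / real a ^ k"
   and cy: "real (a*j + mid a) / real a ^ k \<le> zy" "zy \<le> real (a*j + mid a) / real a ^ k + 1 / real a ^ k"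
    using assms(7) unfolding z sq_def csq_def by auto
  have X: "real (a*i + mid a) \<le> X" "X \<le> real (a*i + mid a) + 1"
    using cx ak unfolding X_def by (auto simp: field_simps)
  have Y: "real (a*j + mid a) \<le> Y" "Y \<le> real (a*j + mid a) + 1"
    using cy ak unfolding Y_def by (auto simp: field_simps)
  have KK: "Kf (real q) (z, (of_int s1, of_int s2 * (real p / real q))) = of_int s1 * real q * zy - of_int s2 * real p * zx"
    unfolding Kf_def z using assms(6) by (simp add: algebra_simps)
  have "2*(of_int s1 * real q * Y - of_int s2 * real p * X) = 2 * real a ^ k * (of_int s1 * real q * zy - of_int s2 * real p * zx)"
    unfolding X_def Y_def by (simp add: algebra_simps)
  also have "\<dots> = real a * of_int G" using assms(8) unfolding KK .
  finally have "2*(of_int s1 * real q * Y - of_int s2 * real p * X) = real a * of_int G" .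
  then show False using avoid_core[OF assms(1-5) X Y _ assms(9)] by blast
qed

lemma psq_sq: "x \<in> psq a n \<Longrightarrow> \<exists>k i j. 1 \<le> k \<and> k \<le> n \<and> x = sq a k i j"
  unfolding psq_iff by blast

lemma avoid1:
  fixes a p q :: nat and s1 s2 w :: int
  assumes "odd a" "a \<ge> 3" "p + q < a" "odd (p + q)" "s1 = 1 \<or> s1 = -1" "s2 = 1 \<or> s2 = -1" "q > 0"
    "x \<in> psq a n" "z \<in> csq (fst x) (snd x)"
    "Kf (real q) (z, (of_int s1, of_int s2 * (real p / real q))) = 2 * of_int w"
  shows False
proof -
  obtain k i j where kij: "1 \<le> k" "x = sq a k i j" using psq_sq[OF assms(8)] by blast
  have ak: "real a ^ k = real a * real a ^ (k - 1)" using kij(1) by (metis Suc_diff_le diff_Suc_1 power_Suc)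
  define G where "G = 4 * w * int a ^ (k - 1)"
  have "2 * real a ^ k * Kf (real q) (z, (of_int s1, of_int s2 * (real p / real q))) = real a * of_int G"
    unfolding assms(10) G_def ak by simp
  moreover have "odd (G + int p + int q)" using assms(4) unfolding G_def by simp
  ultimately show False using avoid_sq[OF assms(1-3,5-7), of z k i j G] assms(9) kij(2) by blast
qed

lemma avoid2:
  fixes a p q r n0 :: nat and s1 s2 w \<sigma> :: int
  assumes "odd a" "a \<ge> 3" "p + q < a" "odd p" "odd q" "odd r" "s1 = 1 \<or> s1 = -1" "s2 = 1 \<or> s2 = -1" "q > 0"
    "\<sigma> = 1 \<or> \<sigma> = -1" "n0 < k" "z \<in> csq (fst (sq a k i j)) (snd (sq a k i j))"
    "Kf (real q) (z, (of_int s1, of_int s2 * (real p / real q))) = of_int \<sigma> * (real p * real r / (2 * real a ^ n0)) + 2 * of_int w / real a ^ n0"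
  shows False
proof -
  have ak: "real a ^ k = real a * real a ^ (k - n0 - 1) * real a ^ n0" using assms(11)
    by (metis (no_types, lifting) Suc_diff_Suc add.commute diff_diff_left mult.commute power_Suc power_add less_imp_le_nat le_add_diff_inverse2 plus_1_eq_Suc)
  have an0: "real a ^ n0 > 0" using assms(2) by simp
  define G where "G = (\<sigma> * int p * int r + 4 * w) * int a ^ (k - n0 - 1)"
  have "2 * real a ^ k * Kf (real q) (z, (of_int s1, of_int s2 * (real p / real q))) = real a * of_int G"
    unfolding assms(13) G_def ak using an0 by (simp add: field_simps)
  moreover have "odd (G + int p + int q)"
  proof -
    have "odd (\<sigma> * int p * int r + 4 * w)" using assms(4,6,10) by auto
    moreover have "odd (int a ^ (k - n0 - 1))" using assms(1) by simp
    ultimately have "odd G" unfolding G_def by simp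
    then show ?thesis using assms(4,5) by simp
  qed
  ultimately show False using avoid_sq[OF assms(1-3,7-9,12)] by blast
qed

lemma levels_pt:
  assumes "m \<le> n" "\<And>k i j. m < k \<Longrightarrow> k \<le> n \<Longrightarrow> (i,j) \<in> cells a (k-1) \<Longrightarrow> z \<notin> csq (fst (sq a k i j)) (snd (sq a k i j))"
  shows "(z \<in> hbd a n \<longleftrightarrow> z \<in> hbd a m) \<and> (z \<in> vbd a n \<longleftrightarrow> z \<in> vbd a m) \<and> (z \<in> pcorners a n \<longleftrightarrow> z \<in> pcorners a m)"
proof -
  have sub: "psq a m \<subseteq> psq a n" using psq_mono[OF assms(1)] .
  have out: "z \<notin> csq (fst x) (snd x)" if "x \<in> psq a n" "x \<notin> psq a m" for x
    using psq_split[OF that(1), of m] that(2) assms(2) by blast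
  have h: "z \<in> hbd a n \<longleftrightarrow> z \<in> hbd a m"
    unfolding hbd_iff using sub out edges_csq(1) by blast
  have v: "z \<in> vbd a n \<longleftrightarrow> z \<in> vbd a m"
    unfolding vbd_iff using sub out edges_csq(2) by blast
  have c: "z \<in> pcorners a n \<longleftrightarrow> z \<in> pcorners a m"
    unfolding pcorners_iff using sub out edges_csq(3)[OF psq_side_pos] by blast
  show ?thesis using h v c by blast
qed

lemma bstep_levels:
  assumes "m \<le> n" "\<And>t k i j. m < k \<Longrightarrow> k \<le> n \<Longrightarrow> (i,j) \<in> cells a (k-1) \<Longrightarrow> ray x v t \<notin> csq (fst (sq a k i j)) (snd (sq a k i j))"
  shows "bstep a n (x,v) = bstep a m (x,v)"
proof -
  have P: "\<And>t. (ray x v t \<in> hbd a n \<longleftrightarrow> ray x v t \<in> hbd a m) \<and> (ray x v t \<in> vbd a n \<longleftrightarrow> ray x v t \<in> vbd a m) \<and> (ray x v t \<in> pcorners a n \<longleftrightarrow> ray x v t \<in> pcorners a m)"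
    using levels_pt[OF assms(1)] assms(2) by blast
  have H: "hit a n x v = hit a m x v"
    by (rule ext) (simp add: hit_def P)
  show ?thesis unfolding bstep_def Let_def fst_conv snd_conv H using P by simp
qed



definition LatS :: "real \<Rightarrow> real \<Rightarrow> real \<Rightarrow> bool" where
  "LatS c d z \<longleftrightarrow> (\<exists>\<sigma> w::int. (\<sigma> = 1 \<or> \<sigma> = -1) \<and> z = of_int \<sigma> * c + 2 * of_int w / d)"

lemma LatS_neg: "LatS c d z \<Longrightarrow> LatS c d (- z)"
proof -
  assume "LatS c d z"
  then obtain \<sigma> w where "(\<sigma> = 1 \<or> \<sigma> = -1)" "z = of_int \<sigma> * c + 2 * of_int w / d" unfolding LatS_def by blast
  then show ?thesis unfolding LatS_def
    by (intro exI[of _ "-\<sigma>"] exI[of _ "-w"]) auto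
qed

lemma LatS_shift: "LatS c d z \<Longrightarrow> LatS c d (z + 2 * of_int j / d)"
proof -
  assume "LatS c d z"
  then obtain \<sigma> w where "(\<sigma> = 1 \<or> \<sigma> = -1)" "z = of_int \<sigma> * c + 2 * of_int w / d" unfolding LatS_def by blast
  then show ?thesis unfolding LatS_def
    by (intro exI[of _ "\<sigma>"] exI[of _ "w + j"]) (auto simp: add_divide_distrib)
qed

lemma LatS_finite:
  assumes "d > 0"
  shows "finite {z. LatS c d z \<and> \<bar>z\<bar> \<le> B}"
proof -
  define M where "M = \<lceil>(B + \<bar>c\<bar>) * d\<rceil>"
  have "{z. LatS c d z \<and> \<bar>z\<bar> \<le> B} \<subseteq> (\<lambda>(\<sigma>,w). of_int \<sigma> * c + 2 * of_int w / d) ` ({1,-1} \<times> {-M..M})"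
  proof
    fix z assume "z \<in> {z. LatS c d z \<and> \<bar>z\<bar> \<le> B}"
    then obtain \<sigma> w where s: "(\<sigma> = 1 \<or> \<sigma> = -1)" "z = of_int \<sigma> * c + 2 * of_int w / d" and zB: "\<bar>z\<bar> \<le> B"
      unfolding LatS_def by blast
    have "\<bar>of_int \<sigma> * c\<bar> = \<bar>c\<bar>" using s(1) by auto
    then have "\<bar>2 * of_int w / d\<bar> \<le> B + \<bar>c\<bar>" using s(2) zB by linarith
    moreover have "\<bar>2 * of_int w / d\<bar> = 2 * \<bar>real_of_int w\<bar> / d" using assms by (simp add: abs_divide abs_mult)
    ultimately have "2 * \<bar>real_of_int w\<bar> / d \<le> B + \<bar>c\<bar>" by simp
    then have "2 * \<bar>real_of_int w\<bar> \<le> (B + \<bar>c\<bar>) * d" using assms by (simp add: pos_divide_le_eq)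
    then have "\<bar>real_of_int w\<bar> \<le> (B + \<bar>c\<bar>) * d" by linarith
    then have "\<bar>w\<bar> \<le> M" unfolding M_def by linarith
    then show "z \<in> (\<lambda>(\<sigma>,w). of_int \<sigma> * c + 2 * of_int w / d) ` ({1,-1} \<times> {-M..M})"
      using s by (intro image_eqI[where x="(\<sigma>,w)"]) auto
  qed
  moreover have "finite ((\<lambda>(\<sigma>,w). of_int \<sigma> * c + 2 * of_int w / d) ` ({1,-1::int} \<times> {-M..M}))"
    by (intro finite_imageI finite_SigmaI) auto
  ultimately show ?thesis by (rule finite_subset)
qed

lemma Bst_int: "Bst \<alpha> s \<Longrightarrow> \<exists>s1 s2::int. (s1 = 1 \<or> s1 = -1) \<and> (s2 = 1 \<or> s2 = -1) \<and> snd s = (of_int s1, of_int s2 * \<alpha>)"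
proof -
  assume "Bst \<alpha> s"
  then have "\<exists>e1 e2. (e1 = 1 \<or> e1 = -1) \<and> (e2 = 1 \<or> e2 = -1) \<and> snd s = (e1, e2*\<alpha>)" unfolding Bst_def by (rule conjunct1)
  then obtain e1 e2 where e: "(e1 = 1 \<or> e1 = -1)" "(e2 = 1 \<or> e2 = -1)" "snd s = (e1, e2*\<alpha>)" by blast
  have "\<exists>s1::int. (s1 = 1 \<or> s1 = -1) \<and> e1 = of_int s1" using e(1) by (metis of_int_1 of_int_minus)
  moreover have "\<exists>s2::int. (s2 = 1 \<or> s2 = -1) \<and> e2 = of_int s2" using e(2) by (metis of_int_1 of_int_minus)
  ultimately show ?thesis using e(3) by blast
qed

lemma parity2:
  fixes p r a n n0 :: nat and J :: int
  assumes "odd p" "odd r" "odd a" "LatS (real p * real r / (2 * real a ^ n0)) (real a ^ n) (of_int J / real a ^ n)"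
  shows False
proof -
  obtain \<sigma> w where s: "(\<sigma> = 1 \<or> \<sigma> = -1)" "of_int J / real a ^ n = of_int \<sigma> * (real p * real r / (2 * real a ^ n0)) + 2 * of_int w / real a ^ n"
    using assms(4) unfolding LatS_def by blast
  have a0: "real a ^ n > 0" "real a ^ n0 > 0" using assms(3) by (simp_all add: odd_pos)
  from s(2) have "of_int J * (2 * real a ^ n0) = of_int \<sigma> * (real p * real r) * real a ^ n + 2 * of_int w * (2 * real a ^ n0)"
  proof -
    have "a > 0" using assms(3) by (simp add: odd_pos)
    then show ?thesis using s(2) a0 by (simp add: field_simps)
  qed
  then have "real_of_int (J * (2 * int a ^ n0)) = real_of_int (\<sigma> * (int p * int r) * int a ^ n + 2 * w * (2 * int a ^ n0))"
    by simp
  then have eq: "J * (2 * int a ^ n0) = \<sigma> * (int p * int r) * int a ^ n + 2 * w * (2 * int a ^ n0)"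
    by (simp only: of_int_eq_iff)
  have "odd (\<sigma> * (int p * int r) * int a ^ n)" using s(1) assms(1-3) by auto
  moreover have "even (J * (2 * int a ^ n0))" "even (2 * w * (2 * int a ^ n0))" by auto
  ultimately show False using eq by (metis even_add)
qed

lemma orbit_levels:
  assumes "\<And>s. P s \<Longrightarrow> bstep a n s = bstep a m s" "\<And>s. P s \<Longrightarrow> \<exists>s'. bstep a m s = Some s' \<and> P s'" "P s0"
  shows "orbit a n s0 k = orbit a m s0 k"
proof -
  have "\<exists>s. orbit a m s0 k = Some s \<and> P s \<and> orbit a n s0 k = orbit a m s0 k"
  proof (induction k)
    case 0 then show ?case using assms(3) by simp
  next
    case (Suc k)
    then obtain s where s: "orbit a m s0 k = Some s" "P s" "orbit a n s0 k = orbit a m s0 k" by blast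
    obtain s' where s': "bstep a m s = Some s'" "P s'" using assms(2)[OF s(2)] by blast
    have "bstep a n s = Some s'" using assms(1)[OF s(2)] s'(1) by simp
    then show ?case using s s' by simp
  qed
  then show ?thesis by blast
qed



lemma periodic_inv:
  fixes p q :: nat
  assumes "odd a" "a \<ge> 3" "q > 0" "\<alpha> = real p / real q" "finite {z. Lt z \<and> \<bar>z\<bar> \<le> real p + real q}"
    "Bst \<alpha> s0" "Lt (Kf (real q) s0)" "Gc a n s0"
    and H: "\<And>x y v T. Bst \<alpha> ((x,y),v) \<Longrightarrow> Lt (Kf (real q) ((x,y),v)) \<Longrightarrow> Gc a n ((x,y),v) \<Longrightarrow>
       hit a n (x,y) v T \<Longrightarrow> (\<forall>t. hit a n (x,y) v t \<longrightarrow> T \<le> t) \<Longrightarrow>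
       ray (x,y) v T \<notin> pcorners a n \<and> Lt (Kf (real q) (ray (x,y) v T, bref a n (ray (x,y) v T) v))"
  shows "periodic a n s0"
proof -
  let ?P = "\<lambda>s. Bst \<alpha> s \<and> Lt (Kf (real q) s) \<and> Gc a n s"
  have a1: "a \<ge> 1" using assms(2) by simp
  have al: "\<alpha> \<ge> 0" using assms(4) by simp
  show ?thesis
  proof (rule periodic_gen[OF a1, of ?P])
    show "finite {s. ?P s}" using fin_gen[OF a1, of "real q" "real p" \<alpha> Lt n] assms(3-5) by simp
    show "?P s0" using assms(6-8) by blast
  next
    fix s assume Ps: "?P s"
    obtain x y v where s: "s = ((x,y),v)" by (metis prod.exhaust)
    have B: "Bst \<alpha> ((x,y),v)" and L: "Lt (Kf (real q) ((x,y),v))" and G: "Gc a n ((x,y),v)" using Ps unfolding s by auto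
    show "\<exists>s'. bstep a n s = Some s' \<and> ?P s'"
      unfolding s by (rule step_gen[OF assms(1,2) al B]) (rule H[OF B L G], assumption+)
  next
    fix s assume Ps: "?P s"
    then show "Gc a n s \<and> snd s \<noteq> (0,0)" using Bst_v[of \<alpha> s] by auto
  qed
qed

lemma hbd_J: "a > 0 \<Longrightarrow> z \<in> hbd a n \<Longrightarrow> \<exists>J::int. snd z = of_int J / real a ^ n"
  using hbd_Hy Hy_Zn unfolding Zn_def by blast
lemma vbd_J: "a > 0 \<Longrightarrow> z \<in> vbd a n \<Longrightarrow> \<exists>J::int. fst z = of_int J / real a ^ n"
  using vbd_Vx Vx_Zn unfolding Zn_def by blast

lemma H_lat:
  fixes p q :: nat
  assumes "a > 0" "Bst \<alpha> ((x,y),v)" "q > 0" "\<alpha> = real p / real q" "LatS c (real a ^ n) (Kf (real q) ((x,y),v))"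
    "hit a n (x,y) v T" "ray (x,y) v T \<notin> pcorners a n"
  shows "LatS c (real a ^ n) (Kf (real q) (ray (x,y) v T, bref a n (ray (x,y) v T) v))"
proof -
  define p' where "p' = ray (x,y) v T"
  obtain s1 s2 :: int where s: "s1 = 1 \<or> s1 = -1" "s2 = 1 \<or> s2 = -1" "v = (of_int s1, of_int s2 * \<alpha>)"
    using Bst_int[OF assms(2)] by auto
  have K: "LatS c (real a ^ n) (Kf (real q) (p', v))" using assms(5) unfolding p'_def K_ray .
  have hp: "p' \<in> Qcorners \<union> pcorners a n \<or> p' \<in> hbd a n \<or> p' \<in> vbd a n" using assms(6) unfolding hit_def p'_def by auto
  consider "p' \<in> Qcorners" "Kf (real q) (p', bref a n p' v) = - Kf (real q) (p',v)"
    | "p' \<notin> Qcorners" "p' \<in> hbd a n" "Kf (real q) (p', bref a n p' v) = - Kf (real q) (p',v) + 2 * real q * fst v * snd p'"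
    | "p' \<notin> Qcorners" "p' \<notin> hbd a n" "Kf (real q) (p', bref a n p' v) = - Kf (real q) (p',v) - 2 * real q * snd v * fst p'"
    using K_bref[of p' "real q" a n v] by blast
  then have "LatS c (real a ^ n) (Kf (real q) (p', bref a n p' v))"
  proof cases
    case 1 then show ?thesis using LatS_neg[OF K] by simp
  next
    case 2
    obtain J where J: "snd p' = of_int J / real a ^ n" using hbd_J[OF assms(1) 2(2)] by blast
    have "2 * real q * fst v * snd p' = 2 * of_int (int q * s1 * J) / real a ^ n" unfolding J s(3) by simp
    then show ?thesis using LatS_shift[OF LatS_neg[OF K], of "int q * s1 * J"] 2(3) by simp
  next
    case 3
    then have "p' \<in> vbd a n" using hp assms(7) unfolding p'_def by blast
    then obtain J where J: "fst p' = of_int J / real a ^ n" using vbd_J[OF assms(1)] by blast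
    have "- 2 * real q * snd v * fst p' = 2 * of_int (- s2 * int p * J) / real a ^ n"
      unfolding J s(3) assms(4) using assms(3) by simp
    then show ?thesis using LatS_shift[OF LatS_neg[OF K], of "- s2 * int p * J"] 3(3) by simp
  qed
  then show ?thesis unfolding p'_def .
qed



lemma orbit_cong:
  assumes "\<And>k. orbit a n s k = orbit a m s k"
  shows "(periodic a n s \<longleftrightarrow> periodic a m s) \<and> orbit_path a n s = orbit_path a m s"
proof -
  have e: "orbit a n s = orbit a m s" using assms by (rule ext)
  show ?thesis unfolding periodic_def singular_def orbit_path_def e by simp
qed

lemma inv_step:
  fixes p q :: nat
  assumes "odd a" "a \<ge> 3" "\<alpha> = real p / real q"
    and H: "\<And>x y v T. Bst \<alpha> ((x,y),v) \<Longrightarrow> Lt (Kf (real q) ((x,y),v)) \<Longrightarrow> Gc a n ((x,y),v) \<Longrightarrow>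
       hit a n (x,y) v T \<Longrightarrow> (\<forall>t. hit a n (x,y) v t \<longrightarrow> T \<le> t) \<Longrightarrow>
       ray (x,y) v T \<notin> pcorners a n \<and> Lt (Kf (real q) (ray (x,y) v T, bref a n (ray (x,y) v T) v))"
    and Ps: "Bst \<alpha> s \<and> Lt (Kf (real q) s) \<and> Gc a n s"
  shows "\<exists>s'. bstep a n s = Some s' \<and> (Bst \<alpha> s' \<and> Lt (Kf (real q) s') \<and> Gc a n s')"
proof -
  have al: "\<alpha> \<ge> 0" using assms(3) by simp
  obtain x y v where s: "s = ((x,y),v)" by (metis prod.exhaust)
  have B: "Bst \<alpha> ((x,y),v)" and L: "Lt (Kf (real q) ((x,y),v))" and G: "Gc a n ((x,y),v)" using Ps unfolding s by auto
  show ?thesis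
    unfolding s by (rule step_gen[OF assms(1,2) al B]) (rule H[OF B L G], assumption+)
qed

lemma H2:
  fixes a p q r n0 n :: nat
  assumes "odd a" "a \<ge> 3" "odd p" "odd r" "q > 0" "\<alpha> = real p / real q"
    "Bst \<alpha> ((x,y),v)" "LatS (real p * real r / (2 * real a ^ n0)) (real a ^ n) (Kf (real q) ((x,y),v))"
    "hit a n (x,y) v T"
  shows "ray (x,y) v T \<notin> pcorners a n \<and>
     LatS (real p * real r / (2 * real a ^ n0)) (real a ^ n) (Kf (real q) (ray (x,y) v T, bref a n (ray (x,y) v T) v))"
proof -
  have a0: "a > 0" using assms(2) by simp
  have npc: "ray (x,y) v T \<notin> pcorners a n"
  proof
    assume pc: "ray (x,y) v T \<in> pcorners a n"
    define p' where "p' = ray (x,y) v T"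
    have "p' \<in> hbd a n" "p' \<in> vbd a n" using corners_hv[of p' a n] pc unfolding p'_def by auto
    then obtain J1 J2 where J: "snd p' = of_int J1 / real a ^ n" "fst p' = of_int J2 / real a ^ n"
      using hbd_J[OF a0] vbd_J[OF a0] by blast
    obtain s1 s2 :: int where s: "s1 = 1 \<or> s1 = -1" "s2 = 1 \<or> s2 = -1" "v = (of_int s1, of_int s2 * \<alpha>)"
      using Bst_int[OF assms(7)] by auto
    have "Kf (real q) (p', v) = real q * (fst v * snd p' - snd v * fst p')" by (simp add: Kf_def)
    also have "\<dots> = of_int (s1 * int q * J1 - s2 * int p * J2) / real a ^ n"
      unfolding J s(3) assms(6) using assms(5) by (simp add: field_simps diff_divide_distrib)
    finally have "Kf (real q) (p', v) = of_int (s1 * int q * J1 - s2 * int p * J2) / real a ^ n" .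
    moreover have "Kf (real q) (p', v) = Kf (real q) ((x,y),v)" unfolding p'_def K_ray ..
    ultimately show False using parity2[OF assms(3,4,1)] assms(8) by metis
  qed
  show ?thesis using npc H_lat[OF a0 assms(7,5,6,8,9) npc] by blast
qed

lemma case2_periodic:
  fixes a p q r n0 n :: nat
  assumes "odd a" "a \<ge> 3" "odd p" "odd q" "odd r" "q > 0" "\<alpha> = real p / real q" "0 < r" "r < 2 * a ^ n0"
  shows "periodic a n ((real r / (2 * real a ^ n0), 0), (1, \<alpha>))"
proof -
  define c where "c = real p * real r / (2 * real a ^ n0)"
  define x0 where "x0 = real r / (2 * real a ^ n0)"
  have an0: "real a ^ n0 > 0" using assms(2) by simp
  have x0: "0 < x0" "x0 < 1" unfolding x0_def using assms(8,9) an0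
    by (auto simp: divide_less_eq) (metis of_nat_less_iff of_nat_mult of_nat_numeral of_nat_power)
  have al: "\<alpha> > 0" using assms(3,6,7) by (simp add: odd_pos)
  show ?thesis unfolding x0_def[symmetric]
  proof (rule periodic_inv[OF assms(1,2,6,7), of "LatS c (real a ^ n)"])
    show "finite {z. LatS c (real a ^ n) z \<and> \<bar>z\<bar> \<le> real p + real q}"
      using assms(2) by (intro LatS_finite) simp
    show "Bst \<alpha> ((x0, 0), 1, \<alpha>)" unfolding Bst_def using x0 al
      by (auto intro!: exI[of _ "1::real"])
    have "Kf (real q) ((x0, 0), 1, \<alpha>) = of_int (-1) * c + 2 * of_int 0 / real a ^ n"
      unfolding Kf_def c_def x0_def assms(7) using assms(6) by simp
    then show "LatS c (real a ^ n) (Kf (real q) ((x0, 0), 1, \<alpha>))" unfolding LatS_def by blast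
    have "(x0,0) \<notin> pcorners a n" using pcorners_interior[OF assms(1,2)] by fastforce
    moreover have "(x0,0) \<in> hbd a n" using x0 by (intro hedgesQ) auto
    ultimately show "Gc a n ((x0, 0), 1, \<alpha>)" unfolding Gc_def using al by auto
  next
    fix x y v T
    assume "Bst \<alpha> ((x, y), v)" "LatS c (real a ^ n) (Kf (real q) ((x, y), v))" "hit a n (x, y) v T"
    then show "ray (x, y) v T \<notin> pcorners a n \<and> LatS c (real a ^ n) (Kf (real q) (ray (x, y) v T, bref a n (ray (x, y) v T) v))"
      unfolding c_def using H2[OF assms(1,2,3,5,6,7)] by blast
  qed
qed

lemma case2_s0:
  fixes a p q r n0 n L :: nat
  assumes "odd a" "a \<ge> 3" "odd p" "q > 0" "\<alpha> = real p / real q" "0 < r" "r < 2 * a ^ n0"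
  shows "Bst \<alpha> ((real r / (2 * real a ^ n0), 0), (1, \<alpha>))
    \<and> LatS (real p * real r / (2 * real a ^ n0)) (real a ^ L) (Kf (real q) ((real r / (2 * real a ^ n0), 0), (1, \<alpha>)))
    \<and> Gc a n ((real r / (2 * real a ^ n0), 0), (1, \<alpha>))"
proof -
  define c where "c = real p * real r / (2 * real a ^ n0)"
  define x0 where "x0 = real r / (2 * real a ^ n0)"
  have an0: "real a ^ n0 > 0" using assms(2) by simp
  have x0: "0 < x0" "x0 < 1" unfolding x0_def using assms(6,7) an0
    by (auto simp: divide_less_eq) (metis of_nat_less_iff of_nat_mult of_nat_numeral of_nat_power)
  have al: "\<alpha> > 0" using assms(3,4,5) by (simp add: odd_pos)
  have 1: "Bst \<alpha> ((x0, 0), 1, \<alpha>)" unfolding Bst_def using x0 al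
    by (auto intro!: exI[of _ "1::real"])
  have "Kf (real q) ((x0, 0), 1, \<alpha>) = of_int (-1) * c + 2 * of_int 0 / real a ^ L"
    unfolding Kf_def c_def x0_def assms(5) using assms(4) by simp
  then have 2: "LatS c (real a ^ L) (Kf (real q) ((x0, 0), 1, \<alpha>))" unfolding LatS_def by blast
  have "(x0,0) \<notin> pcorners a n" using pcorners_interior[OF assms(1,2)] by fastforce
  moreover have "(x0,0) \<in> hbd a n" using x0 by (intro hedgesQ) auto
  ultimately have 3: "Gc a n ((x0, 0), 1, \<alpha>)" unfolding Gc_def using al by auto
  show ?thesis using 1 2 3 unfolding c_def x0_def by blast
qed

lemma case2_const:
  fixes a p q r n0 n :: nat
  assumes "odd a" "a \<ge> 3" "odd p" "odd q" "odd r" "q > 0" "\<alpha> = real p / real q" "0 < r" "r < 2 * a ^ n0"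
    "p + q < a" "n0 \<le> n"
  shows "orbit a n ((real r / (2 * real a ^ n0), 0), (1, \<alpha>)) k = orbit a n0 ((real r / (2 * real a ^ n0), 0), (1, \<alpha>)) k"
proof -
  define c where "c = real p * real r / (2 * real a ^ n0)"
  let ?P = "\<lambda>s. Bst \<alpha> s \<and> LatS c (real a ^ n0) (Kf (real q) s) \<and> Gc a n0 s"
  show ?thesis
  proof (rule orbit_levels[of ?P])
    fix s assume Ps: "?P s"
    obtain x y v where s: "s = ((x,y),v)" by (metis prod.exhaust)
    obtain s1 s2 :: int where sv: "s1 = 1 \<or> s1 = -1" "s2 = 1 \<or> s2 = -1" "v = (of_int s1, of_int s2 * \<alpha>)"
      using Bst_int[of \<alpha> s] Ps unfolding s by auto
    obtain \<sigma> w where sw: "\<sigma> = 1 \<or> \<sigma> = -1" "Kf (real q) ((x,y),v) = of_int \<sigma> * c + 2 * of_int w / real a ^ n0"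
      using Ps unfolding s LatS_def by blast
    have "bstep a n ((x,y),v) = bstep a n0 ((x,y),v)"
    proof (rule bstep_levels[OF assms(11)])
      fix t k i j assume k: "n0 < k" "k \<le> n" "(i,j) \<in> cells a (k - 1)"
      show "ray (x,y) v t \<notin> csq (fst (sq a k i j)) (snd (sq a k i j))"
      proof
        assume z: "ray (x,y) v t \<in> csq (fst (sq a k i j)) (snd (sq a k i j))"
        have "Kf (real q) (ray (x,y) v t, (of_int s1, of_int s2 * (real p / real q))) = of_int \<sigma> * (real p * real r / (2 * real a ^ n0)) + 2 * of_int w / real a ^ n0"
          using sw(2) unfolding K_ray sv(3) assms(7) c_def .
        then show False using avoid2[OF assms(1,2,10,3,4,5) sv(1,2) assms(6) sw(1) k(1) z] by blast
      qed
    qed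
    then show "bstep a n s = bstep a n0 s" unfolding s .
  next
    fix s assume Ps: "?P s"
    have Hc: "ray (x,y) v T \<notin> pcorners a n0 \<and> LatS c (real a ^ n0) (Kf (real q) (ray (x,y) v T, bref a n0 (ray (x,y) v T) v))"
      if "Bst \<alpha> ((x,y),v)" "LatS c (real a ^ n0) (Kf (real q) ((x,y),v))" "Gc a n0 ((x,y),v)" "hit a n0 (x,y) v T"
         "\<forall>t. hit a n0 (x,y) v t \<longrightarrow> T \<le> t" for x y v T
      using H2[OF assms(1,2,3,5,6,7) that(1) _ that(4)] that(2) unfolding c_def by blast
    show "\<exists>s'. bstep a n0 s = Some s' \<and> ?P s'"
      by (rule inv_step[OF assms(1,2,7) Hc Ps])
  next
    show "?P ((real r / (2 * real a ^ n0), 0), (1, \<alpha>))" unfolding c_def using case2_s0[OF assms(1,2,3,6,7,8,9)] by blast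
  qed
qed

lemma psq_0: "psq a 0 = {}"
proof -
  have "x \<notin> psq a 0" for x unfolding psq_iff by auto
  then show ?thesis by blast
qed
lemma pcorners_0: "pcorners a 0 = {}"
proof -
  have "x \<notin> pcorners a 0" for x unfolding pcorners_iff psq_0 by auto
  then show ?thesis by blast
qed

lemma case1:
  fixes a p q :: nat
  assumes "odd a" "a \<ge> 3" "odd (p + q)" "p + q < a" "q > 0" "\<alpha> = real p / real q"
  shows "orbit a n ((0,0), (1, \<alpha>)) k = orbit a 0 ((0,0), (1, \<alpha>)) k" and "periodic a 0 ((0,0), (1, \<alpha>))"
proof -
  let ?s0 = "((0::real,0::real), (1::real, \<alpha>))"
  let ?P = "\<lambda>s. Bst \<alpha> s \<and> LatS 0 (real a ^ 0) (Kf (real q) s) \<and> Gc a 0 s"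
  have a0: "a > 0" using assms(2) by simp
  have al: "\<alpha> \<ge> 0" using assms(6) by simp
  have H: "ray (x,y) v T \<notin> pcorners a 0 \<and> LatS 0 (real a ^ 0) (Kf (real q) (ray (x,y) v T, bref a 0 (ray (x,y) v T) v))"
    if "Bst \<alpha> ((x,y),v)" "LatS 0 (real a ^ 0) (Kf (real q) ((x,y),v))" "hit a 0 (x,y) v T" for x y v T
    using H_lat[OF a0 that(1) assms(5,6) that(2,3)] pcorners_0 by blast
  have P0: "?P ?s0"
  proof -
    have "Bst \<alpha> ?s0" unfolding Bst_def using al by (auto intro!: exI[of _ "1::real"])
    moreover have "LatS 0 (real a ^ 0) (Kf (real q) ?s0)" unfolding LatS_def Kf_def
      by (intro exI[of _ "1::int"] exI[of _ "0::int"]) simp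
    moreover have "Gc a 0 ?s0" unfolding Gc_def pcorners_0 Qcorners_def sqcorners_def by simp
    ultimately show ?thesis by blast
  qed
  have Hc: "ray (x,y) v T \<notin> pcorners a 0 \<and> LatS 0 (real a ^ 0) (Kf (real q) (ray (x,y) v T, bref a 0 (ray (x,y) v T) v))"
    if "Bst \<alpha> ((x,y),v)" "LatS 0 (real a ^ 0) (Kf (real q) ((x,y),v))" "Gc a 0 ((x,y),v)" "hit a 0 (x,y) v T"
       "\<forall>t. hit a 0 (x,y) v t \<longrightarrow> T \<le> t" for x y v T
    using H[OF that(1,2,4)] .
  have cl: "\<exists>s'. bstep a 0 s = Some s' \<and> ?P s'" if "?P s" for s
    by (rule inv_step[OF assms(1,2,6) Hc that])
  show "periodic a 0 ?s0"
  proof (rule periodic_inv[OF assms(1,2,5,6), of "LatS 0 (real a ^ 0)"])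
    show "finite {z. LatS 0 (real a ^ 0) z \<and> \<bar>z\<bar> \<le> real p + real q}" by (intro LatS_finite) simp
  qed (use P0 H in auto)
  show "orbit a n ?s0 k = orbit a 0 ?s0 k"
  proof (rule orbit_levels[of ?P])
    fix s assume Ps: "?P s"
    obtain x y v where s: "s = ((x,y),v)" by (metis prod.exhaust)
    obtain s1 s2 :: int where sv: "s1 = 1 \<or> s1 = -1" "s2 = 1 \<or> s2 = -1" "v = (of_int s1, of_int s2 * \<alpha>)"
      using Bst_int[of \<alpha> s] Ps unfolding s by auto
    obtain \<sigma> w where sw: "\<sigma> = 1 \<or> \<sigma> = -1" "Kf (real q) ((x,y),v) = of_int \<sigma> * 0 + 2 * of_int w / real a ^ 0"
      using Ps unfolding s LatS_def by blast
    have "bstep a n ((x,y),v) = bstep a 0 ((x,y),v)"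
    proof (rule bstep_levels)
      fix t k i j assume k: "0 < k" "k \<le> n" "(i,j) \<in> cells a (k - 1)"
      have xp: "sq a k i j \<in> psq a n" unfolding psq_iff using k by (intro exI[of _ k] exI[of _ i] exI[of _ j]) auto
      show "ray (x,y) v t \<notin> csq (fst (sq a k i j)) (snd (sq a k i j))"
      proof
        assume z: "ray (x,y) v t \<in> csq (fst (sq a k i j)) (snd (sq a k i j))"
        have "Kf (real q) (ray (x,y) v t, (of_int s1, of_int s2 * (real p / real q))) = 2 * of_int w"
          using sw(2) unfolding K_ray sv(3) assms(6) by simp
        then show False using avoid1[OF assms(1,2,4,3) sv(1,2) assms(5) xp z] by blast
      qed
    qed simp
    then show "bstep a n s = bstep a 0 s" unfolding s .
  qed (use cl P0 in auto)
qed



lemma compat_self: "compatible a n s s"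
proof -
  have r: "fst s = ray (fst s) (snd s) 0" unfolding ray_def by simp
  have "seg (fst s) (fst s) \<subseteq> {fst s}"
  proof
    fix z assume "z \<in> seg (fst s) (fst s)"
    then obtain t where "z = (fst (fst s) + t * (fst (fst s) - fst (fst s)), snd (fst s) + t * (snd (fst s) - snd (fst s)))"
      unfolding seg_def by blast
    then show "z \<in> {fst s}" by simp
  qed
  then show ?thesis unfolding compatible_def using r by blast
qed

lemma final_gen:
  assumes "\<And>n. periodic a n s" "\<And>n k. N \<le> n \<Longrightarrow> orbit a n s k = orbit a N s k"
  shows "(\<forall>m n. m < n \<longrightarrow> compatible a n s s) \<and> (\<forall>n. periodic a n s)
     \<and> (\<exists>N. (\<forall>n\<ge>N. orbit_path a (Suc n) s = orbit_path a n s) \<and> periodic_orbit_Sa a (orbit_path a N s))"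
proof -
  have op: "orbit_path a n s = orbit_path a N s" if "N \<le> n" for n
    using orbit_cong[of a n s N] assms(2)[OF that] by blast
  have c: "\<forall>n\<ge>N. orbit_path a (Suc n) s = orbit_path a n s"
  proof (intro allI impI)
    fix n assume "N \<le> n"
    then show "orbit_path a (Suc n) s = orbit_path a n s" using op[of n] op[of "Suc n"] by simp
  qed
  have p1: "\<forall>n\<ge>N. periodic a n ((\<lambda>_. s) n)" using assms(1) by simp
  have p2: "\<forall>m n. N \<le> m \<and> m < n \<longrightarrow> compatible a n ((\<lambda>_. s) n) ((\<lambda>_. s) m)" using compat_self by simp
  have p3: "\<exists>M\<ge>N. (\<forall>n\<ge>M. orbit_path a (Suc n) ((\<lambda>_. s) (Suc n)) = orbit_path a n ((\<lambda>_. s) n))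
                 \<and> orbit_path a N s = orbit_path a M ((\<lambda>_. s) M)" using c by (intro exI[of _ N]) simp
  have "periodic_orbit_Sa a (orbit_path a N s)"
    unfolding periodic_orbit_Sa_def
    by (rule exI[of _ N], rule exI[of _ "\<lambda>_. s"]) (use p1 p2 p3 in simp)
  moreover have "\<forall>m n. m < n \<longrightarrow> compatible a n s s" using compat_self by simp
  moreover have "\<forall>n. periodic a n s" using assms(1) by simp
  ultimately show ?thesis using c by blast
qed

theorem theorem4p2:
  fixes a :: nat and \<alpha> :: real
  assumes "odd a" and "a \<ge> 3" and "\<alpha> \<in> A_set a \<union> B_set a"
  shows "(\<alpha> \<in> A_set (a - 2) \<longrightarrow>
            (let s = ((0, 0), (1, \<alpha>)) in
              (\<forall>m n. m < n \<longrightarrow> compatible a n s s)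
              \<and> (\<forall>n. periodic a n s)
              \<and> (\<exists>N. (\<forall>n\<ge>N. orbit_path a (Suc n) s = orbit_path a n s)
                     \<and> periodic_orbit_Sa a (orbit_path a N s))))
       \<and> (\<alpha> \<in> B_set a \<longrightarrow>
            (\<forall>(n0::nat) (r::nat). 1 \<le> n0 \<and> odd r \<and> 0 < r \<and> r < 2 * a ^ n0 \<longrightarrow>
              (let s = ((real r / (2 * real a ^ n0), 0), (1, \<alpha>)) in
                (\<forall>m n. m < n \<longrightarrow> compatible a n s s)
                \<and> (\<forall>n. periodic a n s)
                \<and> (\<exists>N. (\<forall>n\<ge>N. orbit_path a (Suc n) s = orbit_path a n s)
                       \<and> periodic_orbit_Sa a (orbit_path a N s)))))"
proof (intro conjI impI allI)
  assume A: "\<alpha> \<in> A_set (a - 2)"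
  obtain p q :: nat where pq: "odd (p + q)" "p + q < a" "q > 0" "\<alpha> = real p / real q"
  proof (cases "a - 2 = 1")
    case True
    then have "\<alpha> \<in> A_set 1" using A by simp
    then have "\<alpha> = 0" unfolding A_set_def by simp
    moreover have "odd (0 + 1::nat)" "0 + 1 < a" "(1::nat) > 0" using assms(2) by auto
    ultimately show ?thesis using that[of 0 1] by simp
  next
    case False
    have "\<alpha> \<in> {real p / real q | p q. p + q \<le> a - 2 \<and> p < q \<and> q \<le> a - 2 - 1 \<and> odd (p + q)}"
      using A False unfolding A_set_def by simp
    then obtain p q :: nat where pq: "\<alpha> = real p / real q" "p + q \<le> a - 2" "p < q" "odd (p + q)"
      by blast
    have "p + q < a" "q > 0" using pq(2,3) assms(2) by auto
    then show ?thesis using that[of p q] pq(1,4) by blast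
  qed
  let ?s = "((0::real,0::real), (1::real, \<alpha>))"
  have o: "orbit a n ?s k = orbit a 0 ?s k" for n k using case1(1)[OF assms(1,2) pq] .
  have per: "periodic a n ?s" for n using case1(2)[OF assms(1,2) pq] orbit_cong[of a n ?s 0] o by blast
  show "let s = ?s in (\<forall>m n. m < n \<longrightarrow> compatible a n s s) \<and> (\<forall>n. periodic a n s)
              \<and> (\<exists>N. (\<forall>n\<ge>N. orbit_path a (Suc n) s = orbit_path a n s) \<and> periodic_orbit_Sa a (orbit_path a N s))"
    unfolding Let_def by (rule final_gen[of a ?s 0, OF per o])
next
  fix n0 r :: nat
  assume B: "\<alpha> \<in> B_set a" and nr: "1 \<le> n0 \<and> odd r \<and> 0 < r \<and> r < 2 * a ^ n0"
  obtain p q :: nat where pq: "\<alpha> = real p / real q" "p + q \<le> a - 1" "1 \<le> p" "p \<le> q" "odd p" "odd q"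
  proof -
    have "\<alpha> \<in> {real p / real q | p q. p + q \<le> a - 1 \<and> 1 \<le> p \<and> p \<le> q \<and> q \<le> a - 2 \<and> odd p \<and> odd q}"
      using B unfolding B_set_def .
    then show ?thesis using that by blast
  qed
  have pq2: "q > 0" "p + q < a" using pq assms(2) by auto
  let ?s = "((real r / (2 * real a ^ n0), 0), (1, \<alpha>))"
  have per: "periodic a n ?s" for n
    using case2_periodic[OF assms(1,2) pq(5,6) _ pq2(1) pq(1)] nr by blast
  have o: "orbit a n ?s k = orbit a n0 ?s k" if "n0 \<le> n" for n k
    using case2_const[OF assms(1,2) pq(5,6) _ pq2(1) pq(1) _ _ pq2(2) that] nr by blast
  show "let s = ?s in (\<forall>m n. m < n \<longrightarrow> compatible a n s s) \<and> (\<forall>n. periodic a n s)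
              \<and> (\<exists>N. (\<forall>n\<ge>N. orbit_path a (Suc n) s = orbit_path a n s) \<and> periodic_orbit_Sa a (orbit_path a N s))"
    unfolding Let_def by (rule final_gen[of a ?s n0, OF per o])
qed


end
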